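(* Let $n\ge2$, $k\ge1$. The John ellipsoid (maximum-volume ellipsoid contained in) of $\overline C$, viewed as a convex body in the affine hyperplane $M$ with the Euclidean structure induced by $\langle f,g\rangle=\int_{S^{n-1}}fg\,d\sigma$, is the ball $\{f\in M:\|f-r^{2k}\|\le \rho\}$ with center $r^{2k}=(x_1^2+\dots+x_n^2)^k$ and radius \[ \rho=\frac{1}{\sqrt{\binom{n+2k-1}{2k}-1}} . \]
   Context: $P_{n,2k}$ is the space of real forms of degree $2k$ in $n$ variables; $\sigma$ is the rotation-invariant probability measure on $S^{n-1}$; $\|f\|=\langle f,f\rangle^{1/2}$. $M=\{f\in P_{n,2k}:\int_{S^{n-1}}f\,d\sigma=1\}$, $C$ is the cone of forms in $P_{n,2k}$ nonnegative on $\mathbb R^n$, and $\overline C=C\cap M$. *)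

theory Defs
  imports "HOL-Analysis.Analysis"
begin

definition mono_exps :: "nat \<Rightarrow> ('n::finite \<Rightarrow> nat) set" where
  "mono_exps d = {\<alpha>. (\<Sum>i\<in>UNIV. \<alpha> i) = d}"

text \<open>P_{n,d}: real forms of degree d in n = CARD('n) variables, as functions on R^n.\<close>
definition forms :: "nat \<Rightarrow> (real^'n::finite \<Rightarrow> real) set" where
  "forms d = {f. \<exists>c::('n \<Rightarrow> nat) \<Rightarrow> real.
      f = (\<lambda>x. \<Sum>\<alpha>\<in>mono_exps d. c \<alpha> * (\<Prod>i\<in>UNIV. (x $ i) ^ (\<alpha> i)))}"

text \<open>The rotation-invariant probability measure on the unit sphere S^{n-1}, obtained as the
  push-forward of the uniform distribution on the unit ball under radial projection.\<close>
definition sigma :: "(real^'n::finite) measure" where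
  "sigma = distr (uniform_measure lborel (ball 0 1)) borel (\<lambda>x. x /\<^sub>R norm x)"

definition sint :: "(real^'n::finite \<Rightarrow> real) \<Rightarrow> real" where
  "sint f = integral\<^sup>L sigma f"

definition ip :: "(real^'n::finite \<Rightarrow> real) \<Rightarrow> (real^'n \<Rightarrow> real) \<Rightarrow> real" where
  "ip f g = sint (\<lambda>x. f x * g x)"

definition fnorm :: "(real^'n::finite \<Rightarrow> real) \<Rightarrow> real" where
  "fnorm f = sqrt (ip f f)"

definition Mset :: "nat \<Rightarrow> (real^'n::finite \<Rightarrow> real) set" where
  "Mset k = {f \<in> forms (2*k). sint f = 1}"

definition Ccone :: "nat \<Rightarrow> (real^'n::finite \<Rightarrow> real) set" where
  "Ccone k = {f \<in> forms (2*k). \<forall>x. 0 \<le> f x}"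

definition Cbar :: "nat \<Rightarrow> (real^'n::finite \<Rightarrow> real) set" where
  "Cbar k = Ccone k \<inter> Mset k"

definition r2k :: "nat \<Rightarrow> real^'n::finite \<Rightarrow> real" where
  "r2k k = (\<lambda>x. (\<Sum>i\<in>UNIV. (x $ i)^2) ^ k)"

definition rho :: "nat \<Rightarrow> nat \<Rightarrow> real" where
  "rho n k = 1 / sqrt (real ((n + 2*k - 1) choose (2*k)) - 1)"

definition onb_M0 :: "nat \<Rightarrow> nat \<Rightarrow> (nat \<Rightarrow> real^'n::finite \<Rightarrow> real) \<Rightarrow> bool" where
  "onb_M0 k m g \<longleftrightarrow>
     (\<forall>i<m. g i \<in> forms (2*k) \<and> sint (g i) = 0) \<and>
     (\<forall>i<m. \<forall>j<m. ip (g i) (g j) = (if i = j then 1 else 0)) \<and>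
     (\<forall>f \<in> forms (2*k). sint f = 0 \<longrightarrow> (\<exists>t. f = (\<lambda>x. \<Sum>i<m. t i * g i x)))"

text \<open>Ellipsoid in M with center c, orthonormal principal axes g_i and semi-axis lengths a_i > 0;
  its (m-dimensional) volume is proportional to the product of the a_i.\<close>
definition ellipsoid :: "(real^'n::finite \<Rightarrow> real) \<Rightarrow> (nat \<Rightarrow> real^'n \<Rightarrow> real) \<Rightarrow> (nat \<Rightarrow> real)
    \<Rightarrow> nat \<Rightarrow> (real^'n \<Rightarrow> real) set" where
  "ellipsoid c g a m = {(\<lambda>x. c x + (\<Sum>i<m. t i * g i x)) | t. (\<Sum>i<m. (t i / a i)^2) \<le> 1}"

end

theory Submission
  imports Defs "HOL-Probability.Probability_Measure" "HOL-Library.Function_Algebras"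
    "HOL-Library.Multiset" "HOL-Computational_Algebra.Polynomial"
begin

abbreviation UB :: "(real^'n::finite) measure" where
  "UB \<equiv> uniform_measure lborel (ball 0 1)"

definition nproj :: "real^'n::finite \<Rightarrow> real^'n" where
  "nproj x = x /\<^sub>R norm x"

lemma nproj_meas[measurable]: "nproj \<in> borel_measurable borel"
  unfolding nproj_def by measurable

lemma emeasure_ball_pos: "0 < r \<Longrightarrow> emeasure lborel (ball (c::'a::euclidean_space) r) \<noteq> 0"
proof -
  assume r: "0 < r"
  have "emeasure lborel (ball c r) = ennreal (measure lborel (ball c r))"
    using emeasure_lborel_ball_finite[of c r] by (simp add: emeasure_eq_ennreal_measure)
  moreover have "measure lborel (ball c r) > 0"
    using content_ball_pos[OF r, of c] by simp
  ultimately show ?thesis by simp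
qed

lemma prob_UB: "prob_space (UB :: (real^'n::finite) measure)"
proof
  have "emeasure (UB :: (real^'n::finite) measure) (ball 0 1) = 1"
    by (rule emeasure_uniform_measure_1) (use emeasure_ball_pos[of 1] emeasure_lborel_ball_finite in \<open>auto simp: less_top\<close>)
  moreover have "emeasure (UB :: (real^'n::finite) measure) (space UB) = emeasure UB (ball (0::real^'n) 1)"
    by (simp add: emeasure_uniform_measure)
  ultimately show "emeasure (UB :: (real^'n::finite) measure) (space UB) = 1" by simp
qed

interpretation UBp: prob_space "UB :: (real^'n::finite) measure"
  by (rule prob_UB)

lemma sigma_alt: "sigma = distr UB borel nproj"
  unfolding sigma_def nproj_def by simp

lemma norm_nproj_le: "norm (nproj x) \<le> 1"
  by (cases "x = 0") (simp_all add: nproj_def)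

lemma AE_UB_nz: "AE x in (UB :: (real^'n::finite) measure). x \<noteq> 0"
proof (rule AE_uniform_measureI)
  show "AE x in lborel. x \<in> ball 0 1 \<longrightarrow> x \<noteq> (0::real^'n)"
    using AE_lborel_singleton[of "0::real^'n"] by eventually_elim auto
qed simp

lemma integrable_sigma:
  fixes f :: "real^'n::finite \<Rightarrow> real"
  assumes "continuous_on UNIV f"
  shows "integrable sigma f" "sint f = (\<integral>x. f (nproj x) \<partial>UB)"
proof -
  have fm[measurable]: "f \<in> borel_measurable borel"
    using assms by (simp add: borel_measurable_continuous_onI)
  have "compact (f ` cball 0 1)"
    by (rule compact_continuous_image) (use assms continuous_on_subset in auto)
  then obtain B where B: "\<And>y. y \<in> f ` cball 0 1 \<Longrightarrow> norm y \<le> B"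
    using compact_imp_bounded bounded_iff by metis
  have "integrable UB (\<lambda>x. f (nproj x))"
  proof (rule UBp.integrable_const_bound[where B=B])
    show "AE x in UB. norm (f (nproj x)) \<le> B"
    proof (intro AE_I2)
      fix x :: "real^'n"
      have "f (nproj x) \<in> f ` cball 0 1" using norm_nproj_le[of x] by auto
      then show "norm (f (nproj x)) \<le> B" using B by blast
    qed
  qed measurable
  then show "integrable sigma f"
    unfolding sigma_alt by (subst integrable_distr_eq) auto
  show "sint f = (\<integral>x. f (nproj x) \<partial>UB)"
    unfolding sint_def sigma_alt by (subst integral_distr) auto
qed

lemma norm_nproj: "x \<noteq> 0 \<Longrightarrow> norm (nproj x) = 1"
  by (simp add: nproj_def)

lemma sint_cong_sphere:
  fixes f g :: "real^'n::finite \<Rightarrow> real"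
  assumes "continuous_on UNIV f" "continuous_on UNIV g" "\<And>x. norm x = 1 \<Longrightarrow> f x = g x"
  shows "sint f = sint g"
proof -
  have fm[measurable]: "f \<in> borel_measurable borel" "g \<in> borel_measurable borel"
    using assms by (simp_all add: borel_measurable_continuous_onI)
  have "AE x in UB. f (nproj x) = g (nproj x)"
    using AE_UB_nz by eventually_elim (use assms(3) norm_nproj in auto)
  then have "(\<integral>x. f (nproj x) \<partial>UB) = (\<integral>x. g (nproj x) \<partial>UB)"
    by (intro integral_cong_AE) auto
  then show ?thesis
    using integrable_sigma(2)[OF assms(1)] integrable_sigma(2)[OF assms(2)] by simp
qed

lemma sint_mono_sphere:
  fixes f g :: "real^'n::finite \<Rightarrow> real"
  assumes "continuous_on UNIV f" "continuous_on UNIV g" "\<And>x. norm x = 1 \<Longrightarrow> f x \<le> g x"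
  shows "sint f \<le> sint g"
proof -
  have fm[measurable]: "f \<in> borel_measurable borel" "g \<in> borel_measurable borel"
    using assms by (simp_all add: borel_measurable_continuous_onI)
  have "integrable UB (\<lambda>x. f (nproj x))" "integrable UB (\<lambda>x. g (nproj x))"
    using integrable_sigma(1)[OF assms(1)] integrable_sigma(1)[OF assms(2)]
    by (simp_all add: sigma_alt integrable_distr_eq)
  moreover have "AE x in UB. f (nproj x) \<le> g (nproj x)"
    using AE_UB_nz by eventually_elim (use assms(3) norm_nproj in auto)
  ultimately show ?thesis
    using integrable_sigma(2)[OF assms(1)] integrable_sigma(2)[OF assms(2)]
    by (simp add: integral_mono_AE)
qed

lemma sint_zero_sphere:
  fixes f :: "real^'n::finite \<Rightarrow> real"
  assumes cf: "continuous_on UNIV f" and nn: "\<And>x. norm x = 1 \<Longrightarrow> 0 \<le> f x"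
    and z: "sint f = 0" and x0: "norm x0 = 1"
  shows "f x0 = 0"
proof (rule ccontr)
  assume ne: "f x0 \<noteq> 0"
  have fm[measurable]: "f \<in> borel_measurable borel"
    using cf by (simp add: borel_measurable_continuous_onI)
  have int: "integrable UB (\<lambda>x. f (nproj x))"
    using integrable_sigma(1)[OF cf] by (simp_all add: sigma_alt integrable_distr_eq)
  have "AE x in UB. 0 \<le> f (nproj x)"
    using AE_UB_nz by eventually_elim (use nn norm_nproj in auto)
  with int z have "AE x in UB. f (nproj x) = 0"
    using integrable_sigma(2)[OF cf] integral_nonneg_eq_0_iff_AE by metis
  then have AEl: "AE x in lborel. x \<in> ball 0 1 \<longrightarrow> f (nproj x) = 0"
    by (subst (asm) AE_uniform_measure)
       (use emeasure_ball_pos[of 1] emeasure_lborel_ball_finite in \<open>auto simp: less_top\<close>)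
  define y0 where "y0 = (1/2::real) *\<^sub>R x0"
  have y0nz: "y0 \<noteq> 0" using x0 by (auto simp: y0_def)
  have "nproj y0 = x0" using x0 by (simp add: nproj_def y0_def)
  have "isCont nproj y0"
    unfolding nproj_def using y0nz by (intro continuous_intros) auto
  moreover have "isCont f (nproj y0)"
    using cf by (simp add: continuous_on_eq_continuous_at)
  ultimately have "isCont (\<lambda>x. f (nproj x)) y0"
    by (rule isCont_o2)
  then obtain e where e: "e > 0" "\<And>y. dist y0 y < e \<Longrightarrow> f (nproj y) \<noteq> 0"
    using continuous_at_avoid[of y0 "\<lambda>x. f (nproj x)" 0] ne \<open>nproj y0 = x0\<close> by auto
  define d where "d = min e (1/2)"
  have d: "d > 0" using e by (simp add: d_def)
  have sub: "ball y0 d \<subseteq> ball 0 1"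
  proof
    fix y assume "y \<in> ball y0 d"
    then have "dist y0 y < 1/2" by (simp add: d_def)
    moreover have "norm y0 = 1/2" using x0 by (simp add: y0_def)
    ultimately show "y \<in> ball 0 1"
      by (simp add: dist_norm) (smt (verit) norm_minus_commute norm_triangle_ineq2)
  qed
  have "AE x in lborel. x \<notin> ball y0 d"
    using AEl
  proof eventually_elim
    case (elim x)
    show ?case
    proof
      assume xb: "x \<in> ball y0 d"
      then have "f (nproj x) \<noteq> 0" using e(2)[of x] by (simp add: d_def)
      with elim xb sub show False by auto
    qed
  qed
  then have "ball y0 d \<in> null_sets lborel"
    by (subst (asm) AE_iff_measurable[where N="ball y0 d"]) auto
  then show False using emeasure_ball_pos[OF d, of y0] by auto
qed


lemma orth_open_emeasure:
  fixes T :: "'a::euclidean_space \<Rightarrow> 'a" and G :: "'a set"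
  assumes T: "orthogonal_transformation T" and G: "open G"
  shows "emeasure lebesgue (T ` G) = emeasure lebesgue G"
proof -
  define K where "K = {(c, r::real). 0 < r \<and> ball c r \<subseteq> G}"
  have cov: "\<exists>i. i \<in> K \<and> x \<in> ball (fst i) (snd i) \<and> snd i < d" if "x \<in> G" "0 < d" for x d
  proof -
    obtain e where e: "e > 0" "ball x e \<subseteq> G" using G \<open>x \<in> G\<close> open_contains_ball by blast
    show ?thesis
      by (rule exI[of _ "(x, min e (d/2))"]) (use e that in \<open>auto simp: K_def\<close>)
  qed
  obtain C where C: "countable C" "C \<subseteq> K"
     "pairwise (\<lambda>i j. disjnt (ball (fst i) (snd i)) (ball (fst j) (snd j))) C"
     "negligible (G - (\<Union>i \<in> C. ball (fst i) (snd i)))"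
    using Vitali_covering_theorem_balls[of G K fst snd, OF cov] by blast
  define V where "V = (\<Union>i \<in> C. ball (fst i) (snd i))"
  have VO: "V \<subseteq> G" using C(2) unfolding V_def K_def by fastforce
  have Vs: "V \<in> sets lebesgue"
  proof -
    have "open V" unfolding V_def by auto
    then show ?thesis by (metis borel_open sets_completionI_sets sets_lborel)
  qed
  have disj: "disjoint_family_on (\<lambda>i. ball (fst i) (snd i)) C"
    using C(3) by (auto simp: disjoint_family_on_def pairwise_def disjnt_def)
  have eV: "emeasure lebesgue V = (\<integral>\<^sup>+i. emeasure lebesgue (ball (fst i) (snd i)) \<partial>count_space C)"
    unfolding V_def by (rule emeasure_UN_countable) (use C(1) disj in auto)
  have "emeasure lebesgue G = emeasure lebesgue (V \<union> (G - V))"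
    using VO by (simp add: Un_absorb1)
  also have "\<dots> = emeasure lebesgue V"
    by (rule emeasure_Un_null_set) (use C(4) Vs in \<open>auto simp: V_def negligible_iff_null_sets\<close>)
  finally have eO: "emeasure lebesgue G = emeasure lebesgue V" .
  have TV: "T ` V = (\<Union>i \<in> C. ball (T (fst i)) (snd i))"
    unfolding V_def image_UN using image_orthogonal_transformation_ball[OF T] by simp
  have injT: "inj T" using T by (rule orthogonal_transformation_inj)
  have disj2: "disjoint_family_on (\<lambda>i. ball (T (fst i)) (snd i)) C"
    unfolding disjoint_family_on_def
  proof (intro ballI impI)
    fix i j assume "i \<in> C" "j \<in> C" "i \<noteq> j"
    then have "ball (fst i) (snd i) \<inter> ball (fst j) (snd j) = {}"
      using disj by (auto simp: disjoint_family_on_def)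
    then have "T ` (ball (fst i) (snd i) \<inter> ball (fst j) (snd j)) = {}" by simp
    then show "ball (T (fst i)) (snd i) \<inter> ball (T (fst j)) (snd j) = {}"
      using image_orthogonal_transformation_ball[OF T] image_Int[OF injT] by metis
  qed
  have eTV: "emeasure lebesgue (T ` V) = (\<integral>\<^sup>+i. emeasure lebesgue (ball (T (fst i)) (snd i)) \<partial>count_space C)"
    unfolding TV by (rule emeasure_UN_countable) (use C(1) disj2 in auto)
  have ball_eq: "emeasure lebesgue (ball (T (fst i)) (snd i)) = emeasure lebesgue (ball (fst i) (snd i))"
    if "i \<in> C" for i
  proof -
    have "snd i \<ge> 0" using that C(2) by (auto simp: K_def)
    then show ?thesis
      using emeasure_lebesgue_ball_conv_unit_ball[of "snd i" "T (fst i)"]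
        emeasure_lebesgue_ball_conv_unit_ball[of "snd i" "fst i"] by (simp only:)
  qed
  have eq1: "emeasure lebesgue (T ` V) = emeasure lebesgue V"
    unfolding eTV eV by (intro nn_integral_cong) (simp only: space_count_space ball_eq)
  have "T ` G = T ` V \<union> T ` (G - V)"
    using VO by auto
  moreover have "negligible (T ` (G - V))"
  proof (rule negligible_differentiable_image_negligible)
    show "negligible (G - V)" using C(4) by (simp add: V_def)
    show "T differentiable_on G - V"
      by (rule linear_imp_differentiable_on) (use T orthogonal_transformation_linear in auto)
  qed simp
  moreover have "T ` V \<in> sets lebesgue"
  proof -
    have "open (T ` V)" unfolding TV by auto
    then show ?thesis by (metis borel_open sets_completionI_sets sets_lborel)
  qed
  ultimately have "emeasure lebesgue (T ` G) = emeasure lebesgue (T ` V)"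
    using emeasure_Un_null_set[of "T ` V" lebesgue "T ` (G - V)"] by (simp add: negligible_iff_null_sets)
  then show ?thesis using eq1 eO by simp
qed

lemma orth_cbox_measure:
  fixes T :: "'a::euclidean_space \<Rightarrow> 'a"
  assumes T: "orthogonal_transformation T"
  shows "measure lebesgue (T ` cbox a b) = measure lebesgue (cbox a b)"
proof -
  have lin: "linear T" using T by (rule orthogonal_transformation_linear)
  have sur: "surj T" using T by (rule orthogonal_transformation_surj)
  have ob: "open (T ` box a b)"
    by (rule open_surjective_linear_image) (use lin sur in auto)
  have cb: "cbox a b = box a b \<union> (cbox a b - box a b)" using box_subset_cbox by auto
  have n1: "negligible (cbox a b - box a b)" by (rule negligible_frontier_interval)
  have n2: "negligible (T ` (cbox a b - box a b))"
    by (rule negligible_differentiable_image_negligible[OF order_refl n1])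
       (use lin linear_imp_differentiable_on in auto)
  have "emeasure lebesgue (T ` cbox a b) = emeasure lebesgue (T ` box a b \<union> T ` (cbox a b - box a b))"
  proof -
    have "T ` cbox a b = T ` box a b \<union> T ` (cbox a b - box a b)" using box_subset_cbox by auto
    then show ?thesis by (simp only:)
  qed
  also have "\<dots> = emeasure lebesgue (T ` box a b)"
    by (rule emeasure_Un_null_set) (use ob n2 in \<open>auto simp: negligible_iff_null_sets\<close>)
  also have "\<dots> = emeasure lebesgue (box a b)"
    by (rule orth_open_emeasure[OF T]) (simp add: open_box)
  also have "\<dots> = emeasure lebesgue (box a b \<union> (cbox a b - box a b))"
    by (rule emeasure_Un_null_set[symmetric]) (use n1 in \<open>auto simp: negligible_iff_null_sets\<close>)
  also have "\<dots> = emeasure lebesgue (cbox a b)" using cb by simp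
  finally show ?thesis by (simp add: measure_def)
qed

lemma orth_measure:
  fixes T :: "'a::euclidean_space \<Rightarrow> 'a"
  assumes T: "orthogonal_transformation T" and S: "S \<in> lmeasurable"
  shows "T ` S \<in> lmeasurable" "measure lebesgue (T ` S) = measure lebesgue S"
  using measure_linear_sufficient[OF orthogonal_transformation_linear[OF T] S, of 1]
    orth_cbox_measure[OF T] by auto

lemma distr_UB_orth:
  fixes T :: "real^'n::finite \<Rightarrow> real^'n"
  assumes T: "orthogonal_transformation T"
  shows "distr UB borel T = UB"
proof (rule measure_eqI)
  show "sets (distr UB borel T) = sets UB" by simp
next
  fix A :: "(real^'n) set" assume "A \<in> sets (distr UB borel T)"
  then have A[measurable]: "A \<in> sets borel" by simp
  have lin: "linear T" using T by (rule orthogonal_transformation_linear)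
  have Tm[measurable]: "T \<in> borel_measurable borel"
    using lin by (intro borel_measurable_continuous_onI linear_continuous_on linear_conv_bounded_linear[THEN iffD1])
  define Ti where "Ti = inv T"
  have Ti: "orthogonal_transformation Ti" using T by (simp add: Ti_def orthogonal_transformation_inv)
  have bijT: "bij T" using T by (rule orthogonal_transformation_bij)
  have eqset: "ball 0 1 \<inter> T -` A = Ti ` (ball 0 1 \<inter> A)"
  proof -
    have "T ` (ball 0 1 \<inter> T -` A) = ball 0 1 \<inter> A"
    proof
      show "T ` (ball 0 1 \<inter> T -` A) \<subseteq> ball 0 1 \<inter> A"
        using orthogonal_transformation_norm[OF T] by auto
      show "ball 0 1 \<inter> A \<subseteq> T ` (ball 0 1 \<inter> T -` A)"
      proof
        fix y assume y: "y \<in> ball 0 1 \<inter> A"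
        obtain x where "y = T x" using bijT by (metis bij_pointE)
        then show "y \<in> T ` (ball 0 1 \<inter> T -` A)"
          using y orthogonal_transformation_norm[OF T, of x] by auto
      qed
    qed
    then have "Ti ` T ` (ball 0 1 \<inter> T -` A) = Ti ` (ball 0 1 \<inter> A)" by simp
    then show ?thesis
      using bijT by (simp add: Ti_def image_comp bij_is_inj)
  qed
  have bA: "ball 0 1 \<inter> A \<in> lmeasurable"
    by (rule bounded_set_imp_lmeasurable) auto
  have "T -` A \<in> sets borel" using measurable_sets[OF Tm A] by simp
  then have bTA: "ball 0 1 \<inter> T -` A \<in> sets borel" by (intro sets.Int) auto
  have "emeasure lborel (ball 0 1 \<inter> T -` A) = emeasure lebesgue (ball 0 1 \<inter> T -` A)"
    using bTA by simp
  also have "\<dots> = emeasure lebesgue (Ti ` (ball 0 1 \<inter> A))" by (simp add: eqset)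
  also have "\<dots> = ennreal (measure lebesgue (Ti ` (ball 0 1 \<inter> A)))"
    using orth_measure(1)[OF Ti bA] by (simp add: emeasure_eq_measure2)
  also have "\<dots> = ennreal (measure lebesgue (ball 0 1 \<inter> A))"
    using orth_measure(2)[OF Ti bA] by simp
  also have "\<dots> = emeasure lebesgue (ball 0 1 \<inter> A)"
    using bA by (simp add: emeasure_eq_measure2)
  also have "\<dots> = emeasure lborel (ball 0 1 \<inter> A)" by simp
  finally have eq: "emeasure lborel (ball 0 1 \<inter> T -` A) = emeasure lborel (ball 0 1 \<inter> A)" .
  show "emeasure (distr UB borel T) A = emeasure UB A"
    using eq \<open>T -` A \<in> sets borel\<close> by (simp add: emeasure_distr emeasure_uniform_measure)
qed

lemma nproj_orth:
  assumes T: "orthogonal_transformation T"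
  shows "T (nproj x) = nproj (T x)"
  by (simp add: nproj_def orthogonal_transformation_scaleR[OF T] orthogonal_transformation_norm[OF T])

lemma sint_orth:
  fixes f :: "real^'n::finite \<Rightarrow> real" and T :: "real^'n \<Rightarrow> real^'n"
  assumes T: "orthogonal_transformation T" and cf: "continuous_on UNIV f"
  shows "sint (\<lambda>x. f (T x)) = sint f"
proof -
  have lin: "linear T" using T by (rule orthogonal_transformation_linear)
  have cT: "continuous_on UNIV T"
    using lin by (intro linear_continuous_on linear_conv_bounded_linear[THEN iffD1])
  have Tm[measurable]: "T \<in> borel_measurable borel"
    using cT by (rule borel_measurable_continuous_onI)
  have fm[measurable]: "f \<in> borel_measurable borel"
    using cf by (simp add: borel_measurable_continuous_onI)
  have cfT: "continuous_on UNIV (\<lambda>x. f (T x))"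
    by (rule continuous_on_compose2[OF cf cT]) auto
  have "sint (\<lambda>x. f (T x)) = (\<integral>x. f (T (nproj x)) \<partial>UB)"
    by (rule integrable_sigma(2)[OF cfT])
  also have "\<dots> = (\<integral>x. f (nproj (T x)) \<partial>UB)"
    by (simp add: nproj_orth[OF T])
  also have "\<dots> = (\<integral>x. f (nproj x) \<partial>distr UB borel T)"
    by (subst integral_distr) auto
  also have "\<dots> = (\<integral>x. f (nproj x) \<partial>UB)"
    by (simp add: distr_UB_orth[OF T])
  also have "\<dots> = sint f" by (rule integrable_sigma(2)[OF cf, symmetric])
  finally show ?thesis .
qed


definition mon :: "('n::finite \<Rightarrow> nat) \<Rightarrow> real^'n \<Rightarrow> real" where
  "mon \<alpha> x = (\<Prod>i\<in>UNIV. (x $ i) ^ (\<alpha> i))"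

lemma finite_mono_exps: "finite (mono_exps d :: ('n::finite \<Rightarrow> nat) set)"
proof -
  have "mono_exps d \<subseteq> {\<alpha>::'n \<Rightarrow> nat. \<forall>i. \<alpha> i \<in> {..d}}"
  proof
    fix \<alpha> :: "'n \<Rightarrow> nat" assume "\<alpha> \<in> mono_exps d"
    then have s: "(\<Sum>i\<in>UNIV. \<alpha> i) = d" by (simp add: mono_exps_def)
    have "\<alpha> i \<le> d" for i
      using member_le_sum[of i UNIV \<alpha>] s by simp
    then show "\<alpha> \<in> {\<alpha>. \<forall>i. \<alpha> i \<in> {..d}}" by auto
  qed
  moreover have "finite {\<alpha>::'n \<Rightarrow> nat. \<forall>i. \<alpha> i \<in> {..d}}"
  proof -
    have "{\<alpha>::'n \<Rightarrow> nat. \<forall>i. \<alpha> i \<in> {..d}} = PiE UNIV (\<lambda>_. {..d})"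
      by (auto simp: PiE_def Pi_def extensional_def)
    then show ?thesis by (simp add: finite_PiE)
  qed
  ultimately show ?thesis by (rule finite_subset)
qed

lemma mono_exps_le: "\<alpha> \<in> mono_exps d \<Longrightarrow> \<alpha> i \<le> d"
  using member_le_sum[of i UNIV \<alpha>] by (simp add: mono_exps_def)

lemma forms_iff: "f \<in> forms d \<longleftrightarrow> (\<exists>c. f = (\<lambda>x. \<Sum>\<alpha>\<in>mono_exps d. c \<alpha> * mon \<alpha> x))"
  by (simp add: forms_def mon_def)

lemma forms_add: "f \<in> forms d \<Longrightarrow> g \<in> forms d \<Longrightarrow> (\<lambda>x. f x + g x) \<in> forms d"
  unfolding forms_iff
proof (elim exE)
  fix c e assume f: "f = (\<lambda>x. \<Sum>\<alpha>\<in>mono_exps d. c \<alpha> * mon \<alpha> x)"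
    and g: "g = (\<lambda>x. \<Sum>\<alpha>\<in>mono_exps d. e \<alpha> * mon \<alpha> x)"
  show "\<exists>c. (\<lambda>x. f x + g x) = (\<lambda>x. \<Sum>\<alpha>\<in>mono_exps d. c \<alpha> * mon \<alpha> x)"
    by (rule exI[of _ "\<lambda>\<alpha>. c \<alpha> + e \<alpha>"]) (simp add: f g sum.distrib algebra_simps)
qed

lemma forms_smult: "f \<in> forms d \<Longrightarrow> (\<lambda>x. a * f x) \<in> forms d"
  unfolding forms_iff
proof (elim exE)
  fix c assume f: "f = (\<lambda>x. \<Sum>\<alpha>\<in>mono_exps d. c \<alpha> * mon \<alpha> x)"
  show "\<exists>c. (\<lambda>x. a * f x) = (\<lambda>x. \<Sum>\<alpha>\<in>mono_exps d. c \<alpha> * mon \<alpha> x)"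
    by (rule exI[of _ "\<lambda>\<alpha>. a * c \<alpha>"]) (simp add: f sum_distrib_left algebra_simps)
qed

lemma forms_zero: "(\<lambda>x. 0) \<in> forms d"
  unfolding forms_iff by (rule exI[of _ "\<lambda>_. 0"]) simp

lemma forms_sum:
  assumes "finite A" "\<And>a. a \<in> A \<Longrightarrow> f a \<in> forms d"
  shows "(\<lambda>x. \<Sum>a\<in>A. f a x) \<in> forms d"
  using assms
proof (induction A rule: finite_induct)
  case empty
  then show ?case using forms_zero by simp
next
  case (insert a A)
  then show ?case using forms_add[of "f a" d "\<lambda>x. \<Sum>a\<in>A. f a x"] by simp
qed

lemma forms_lincomb:
  assumes "finite A" "\<And>a. a \<in> A \<Longrightarrow> f a \<in> forms d"
  shows "(\<lambda>x. \<Sum>a\<in>A. t a * f a x) \<in> forms d"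
  by (rule forms_sum[of A "\<lambda>a x. t a * f a x"]) (use assms forms_smult in auto)

lemma mon_forms: "\<alpha> \<in> mono_exps d \<Longrightarrow> mon \<alpha> \<in> forms d"
  unfolding forms_iff
proof (rule exI[of _ "\<lambda>\<beta>. if \<beta> = \<alpha> then 1 else 0"])
  assume a: "\<alpha> \<in> mono_exps d"
  show "mon \<alpha> = (\<lambda>x. \<Sum>\<beta>\<in>mono_exps d. (if \<beta> = \<alpha> then 1 else 0) * mon \<beta> x)"
  proof
    fix x
    have "(\<Sum>\<beta>\<in>mono_exps d. (if \<beta> = \<alpha> then 1 else 0) * mon \<beta> x)
        = (\<Sum>\<beta>\<in>mono_exps d. (if \<beta> = \<alpha> then mon \<beta> x else 0))"
      by (rule sum.cong) auto
    also have "\<dots> = mon \<alpha> x" using a by (simp add: sum.delta[OF finite_mono_exps])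
    finally show "mon \<alpha> x = (\<Sum>\<beta>\<in>mono_exps d. (if \<beta> = \<alpha> then 1 else 0) * mon \<beta> x)" by simp
  qed
qed

lemma mon_mult: "mon \<alpha> x * mon \<beta> x = mon (\<lambda>i. \<alpha> i + \<beta> i) x"
  by (simp add: mon_def power_add prod.distrib)

lemma forms_mult:
  assumes "f \<in> forms a" "g \<in> forms b"
  shows "(\<lambda>x. f x * g x) \<in> forms (a + b)"
proof -
  obtain c where f: "f = (\<lambda>x. \<Sum>\<alpha>\<in>mono_exps a. c \<alpha> * mon \<alpha> x)" using assms(1) forms_iff by blast
  obtain e where g: "g = (\<lambda>x. \<Sum>\<alpha>\<in>mono_exps b. e \<alpha> * mon \<alpha> x)" using assms(2) forms_iff by blast
  have eq: "(\<lambda>x. f x * g x) = (\<lambda>x. \<Sum>\<alpha>\<in>mono_exps a. \<Sum>\<beta>\<in>mono_exps b. (c \<alpha> * e \<beta>) * mon (\<lambda>i. \<alpha> i + \<beta> i) x)"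
    by (simp add: f g sum_product mon_mult[symmetric] algebra_simps)
  have "(\<lambda>i. \<alpha> i + \<beta> i) \<in> mono_exps (a + b)" if "\<alpha> \<in> mono_exps a" "\<beta> \<in> mono_exps b" for \<alpha> \<beta>
    using that by (simp add: mono_exps_def sum.distrib)
  then show ?thesis unfolding eq
    by (intro forms_sum finite_mono_exps forms_lincomb) (auto intro: mon_forms)
qed

lemma forms_one: "(\<lambda>x::real^'n::finite. 1) \<in> forms 0"
proof -
  have "mon (\<lambda>_::'n. 0) = (\<lambda>x. 1)" by (simp add: mon_def fun_eq_iff)
  moreover have "(\<lambda>_::'n. 0) \<in> mono_exps 0" by (simp add: mono_exps_def)
  ultimately show ?thesis using mon_forms by metis
qed

lemma forms_prod:
  assumes "finite A" "\<And>a. a \<in> A \<Longrightarrow> f a \<in> forms (dg a)"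
  shows "(\<lambda>x. \<Prod>a\<in>A. f a x) \<in> forms (\<Sum>a\<in>A. dg a)"
  using assms
proof (induction A rule: finite_induct)
  case empty
  then show ?case using forms_one by simp
next
  case (insert a A)
  then show ?case using forms_mult[of "f a" "dg a" "\<lambda>x. \<Prod>a\<in>A. f a x"] by simp
qed

lemma forms_power:
  assumes "f \<in> forms a"
  shows "(\<lambda>x. f x ^ m) \<in> forms (a * m)"
  using forms_prod[of "{..<m}" "\<lambda>_. f" "\<lambda>_. a"] assms by (simp add: mult.commute)

lemma forms_coord: "(\<lambda>x. x $ j) \<in> forms 1"
proof -
  have "mon (\<lambda>i. if i = j then 1 else 0) = (\<lambda>x. x $ j)"
    by (simp add: mon_def fun_eq_iff if_distrib cong: if_cong)
  moreover have "(\<lambda>i. if i = j then 1 else 0) \<in> mono_exps 1"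
    by (simp add: mono_exps_def)
  ultimately show ?thesis using mon_forms by metis
qed

lemma forms_linear_comp:
  assumes T: "linear T" and f: "f \<in> forms d"
  shows "(\<lambda>x. f (T x)) \<in> forms d"
proof -
  obtain c where fc: "f = (\<lambda>x. \<Sum>\<alpha>\<in>mono_exps d. c \<alpha> * mon \<alpha> x)" using f forms_iff by blast
  have Ti: "(\<lambda>x. T x $ i) \<in> forms 1" for i
  proof -
    have "(\<lambda>x. T x $ i) = (\<lambda>x. \<Sum>j\<in>UNIV. (matrix T $ i $ j) * x $ j)"
    proof
      fix x
      have "T x = matrix T *v x" using matrix_vector_mul(2)[OF T] by metis
      then show "T x $ i = (\<Sum>j\<in>UNIV. (matrix T $ i $ j) * x $ j)"
        by (simp add: matrix_vector_mult_def)
    qed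
    moreover have "(\<lambda>x. \<Sum>j\<in>UNIV. (matrix T $ i $ j) * x $ j) \<in> forms 1"
      by (rule forms_lincomb, simp, rule forms_coord)
    ultimately show ?thesis by simp
  qed
  have "(\<lambda>x. mon \<alpha> (T x)) \<in> forms d" if "\<alpha> \<in> mono_exps d" for \<alpha>
  proof -
    have "(\<lambda>x. \<Prod>i\<in>UNIV. (T x $ i) ^ \<alpha> i) \<in> forms (\<Sum>i\<in>UNIV. 1 * \<alpha> i)"
      by (intro forms_prod forms_power Ti) simp
    then show ?thesis using that by (simp add: mon_def mono_exps_def)
  qed
  then show ?thesis unfolding fc by (intro forms_lincomb finite_mono_exps)
qed

lemma mon_cont: "continuous_on UNIV (mon \<alpha>)"
  unfolding mon_def by (intro continuous_intros)

lemma forms_cont: "f \<in> forms d \<Longrightarrow> continuous_on UNIV f"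
  unfolding forms_iff by (auto intro!: continuous_intros mon_cont)

lemma mon_homog: "\<alpha> \<in> mono_exps d \<Longrightarrow> mon \<alpha> (a *\<^sub>R x) = a ^ d * mon \<alpha> x"
proof -
  assume "\<alpha> \<in> mono_exps d"
  then have "(\<Prod>i\<in>UNIV. a ^ \<alpha> i) = a ^ d" by (simp add: power_sum[symmetric] mono_exps_def)
  then show ?thesis by (simp add: mon_def power_mult_distrib prod.distrib)
qed

lemma forms_homog: "f \<in> forms d \<Longrightarrow> f (a *\<^sub>R x) = a ^ d * f x"
  unfolding forms_iff by (auto simp: mon_homog sum_distrib_left algebra_simps intro!: sum.cong)

lemma r2k_forms: "r2k k \<in> forms (2 * k)"
proof -
  have "(\<lambda>x::real^'n. \<Sum>i\<in>UNIV. (x $ i) ^ 2) \<in> forms (1 * 2)"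
    by (intro forms_sum forms_power forms_coord) simp
  then have "(\<lambda>x::real^'n. (\<Sum>i\<in>UNIV. (x $ i) ^ 2) ^ k) \<in> forms (1 * 2 * k)"
    by (rule forms_power)
  then show ?thesis by (simp add: r2k_def)
qed

lemma sum_sq_norm: "(\<Sum>i\<in>UNIV. (x $ i) ^ 2) = norm x ^ 2"
  by (simp add: norm_vec_def L2_set_def sum_nonneg)

lemma r2k_norm: "r2k k x = norm x ^ (2 * k)"
  by (simp add: r2k_def sum_sq_norm power_mult)

lemma r2k_sphere: "norm x = 1 \<Longrightarrow> r2k k x = 1"
proof -
  assume "norm x = 1"
  then have "(\<Sum>i\<in>UNIV. (x $ i) ^ 2) = 1"
    by (simp add: sum_sq_norm)
  then show ?thesis by (simp add: r2k_def)
qed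


lemma digits_bound:
  fixes a :: "nat \<Rightarrow> nat"
  assumes "\<forall>l<n. a l < b"
  shows "(\<Sum>l<n. a l * b ^ l) < b ^ n"
  using assms
proof (induction n)
  case 0 then show ?case by simp
next
  case (Suc n)
  then have IH: "(\<Sum>l<n. a l * b ^ l) < b ^ n" and an: "a n < b" by auto
  have "(a n + 1) * b ^ n \<le> b * b ^ n"
    using an by (intro mult_le_mono1) simp
  then have "a n * b ^ n + b ^ n \<le> b * b ^ n" by (simp add: algebra_simps)
  then show ?case using IH by simp
qed

lemma digits_inj:
  fixes a a' :: "nat \<Rightarrow> nat"
  assumes "\<forall>l<n. a l < b" "\<forall>l<n. a' l < b" "(\<Sum>l<n. a l * b ^ l) = (\<Sum>l<n. a' l * b ^ l)"
  shows "\<forall>l<n. a l = a' l"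
  using assms
proof (induction n)
  case 0 then show ?case by simp
next
  case (Suc n)
  define S where "S = (\<Sum>l<n. a l * b ^ l)"
  define S' where "S' = (\<Sum>l<n. a' l * b ^ l)"
  have h1: "\<forall>l<n. a l < b" "\<forall>l<n. a' l < b" using Suc.prems(1,2) by simp_all
  have S: "S < b ^ n" "S' < b ^ n"
    unfolding S_def S'_def by (rule digits_bound, rule h1)+
  have eq: "S + a n * b ^ n = S' + a' n * b ^ n" using Suc.prems(3) by (simp add: S_def S'_def)
  have bpos: "b ^ n > 0" using S(1) by linarith
  have d1: "(S + a n * b ^ n) div b ^ n = a n" using S(1) bpos by simp
  have d2: "(S' + a' n * b ^ n) div b ^ n = a' n" using S(2) bpos by simp
  have an: "a n = a' n" using eq d1 d2 by simp
  then have "S = S'" using eq by simp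
  then have IH: "\<forall>l<n. a l = a' l" using Suc.IH h1 unfolding S_def S'_def by blast
  show ?case
  proof (intro allI impI)
    fix l assume "l < Suc n"
    then consider "l < n" | "l = n" by linarith
    then show "a l = a' l" using IH an by cases auto
  qed
qed

lemma mono_exps_inj_weight:
  fixes idx :: "'n::finite \<Rightarrow> nat"
  assumes bij: "bij_betw idx UNIV {0..<CARD('n)}"
    and a: "\<alpha> \<in> mono_exps d" and b: "\<beta> \<in> mono_exps d"
    and w: "(\<Sum>i\<in>UNIV. \<alpha> i * Suc d ^ idx i) = (\<Sum>i\<in>UNIV. \<beta> i * Suc d ^ idx i)"
  shows "\<alpha> = \<beta>"
proof -
  define iv where "iv = inv_into UNIV idx"
  have ivi: "iv (idx i) = i" for i using bij by (simp add: iv_def bij_betw_def)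
  have re: "(\<Sum>i\<in>UNIV. \<gamma> i * Suc d ^ idx i) = (\<Sum>l<CARD('n). \<gamma> (iv l) * Suc d ^ l)" for \<gamma> :: "'n \<Rightarrow> nat"
  proof -
    have "(\<Sum>l\<in>{0..<CARD('n)}. \<gamma> (iv l) * Suc d ^ l) = (\<Sum>i\<in>UNIV. \<gamma> (iv (idx i)) * Suc d ^ idx i)"
      by (rule sum.reindex_bij_betw[OF bij, symmetric])
    then show ?thesis using ivi by (simp add: atLeast0LessThan)
  qed
  have "\<forall>l<CARD('n). \<alpha> (iv l) = \<beta> (iv l)"
    by (rule digits_inj[where b="Suc d"])
       (use w re mono_exps_le[OF a] mono_exps_le[OF b] in \<open>auto simp: le_imp_less_Suc\<close>)
  moreover have "idx i < CARD('n)" for i using bij by (auto simp: bij_betw_def)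
  ultimately show ?thesis using ivi by (metis ext)
qed

lemma mon_indep:
  fixes c :: "('n::finite \<Rightarrow> nat) \<Rightarrow> real"
  assumes z: "\<And>x::real^'n. (\<Sum>\<alpha>\<in>mono_exps d. c \<alpha> * mon \<alpha> x) = 0" and b: "\<beta> \<in> mono_exps d"
  shows "c \<beta> = 0"
proof -
  obtain idx :: "'n \<Rightarrow> nat" where bij: "bij_betw idx UNIV {0..<CARD('n)}"
    using ex_bij_betw_finite_nat[of "UNIV::'n set"] by auto
  define w where "w \<alpha> = (\<Sum>i\<in>UNIV. \<alpha> i * Suc d ^ idx i)" for \<alpha> :: "'n \<Rightarrow> nat"
  define xt where "xt t = (\<chi> i. t ^ (Suc d ^ idx i))" for t :: real
  have monx: "mon \<alpha> (xt t) = t ^ w \<alpha>" for \<alpha> t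
    by (simp add: mon_def xt_def w_def power_sum power_mult[symmetric] mult.commute)
  define p where "p = (\<Sum>\<alpha>\<in>mono_exps d. monom (c \<alpha>) (w \<alpha>))"
  have "poly p t = 0" for t
    using z[of "xt t"] by (simp add: p_def poly_sum poly_monom monx)
  then have p0: "p = 0" using poly_all_0_iff_0 by blast
  have "coeff p (w \<beta>) = (\<Sum>\<alpha>\<in>mono_exps d. if \<alpha> = \<beta> then c \<alpha> else 0)"
    unfolding p_def coeff_sum coeff_monom
  proof (rule sum.cong)
    fix \<alpha> :: "'n \<Rightarrow> nat" assume "\<alpha> \<in> mono_exps d"
    then have "w \<alpha> = w \<beta> \<longleftrightarrow> \<alpha> = \<beta>"
      using mono_exps_inj_weight[OF bij _ b] by (auto simp: w_def)
    then show "(if w \<alpha> = w \<beta> then c \<alpha> else 0) = (if \<alpha> = \<beta> then c \<alpha> else 0)" by simp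
  qed simp
  also have "\<dots> = c \<beta>" using b by (simp add: sum.delta[OF finite_mono_exps])
  finally show ?thesis using p0 by simp
qed

lemma card_mono_exps: "card (mono_exps d :: ('n::finite \<Rightarrow> nat) set) = (CARD('n) + d - 1) choose d"
proof -
  have "bij_betw count (multisets_of_size (UNIV::'n set) d) (mono_exps d)"
  proof (rule bij_betw_imageI)
    show "inj_on count (multisets_of_size (UNIV::'n set) d)"
      by (auto simp: inj_on_def multiset_eq_iff)
    have sz: "size X = (\<Sum>i\<in>UNIV. count X i)" for X :: "'n multiset"
    proof -
      have "size X = (\<Sum>i\<in>set_mset X. count X i)" by (simp add: size_multiset_overloaded_eq)
      also have "\<dots> = (\<Sum>i\<in>UNIV. count X i)"
        by (rule sum.mono_neutral_left) (auto simp: not_in_iff)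
      finally show ?thesis .
    qed
    show "count ` multisets_of_size (UNIV::'n set) d = mono_exps d"
    proof
      show "count ` multisets_of_size (UNIV::'n set) d \<subseteq> mono_exps d"
      proof
        fix \<gamma> :: "'n \<Rightarrow> nat" assume "\<gamma> \<in> count ` multisets_of_size UNIV d"
        then obtain X where X: "X \<in> multisets_of_size UNIV d" "\<gamma> = count X" by blast
        then have "size X = d" by (simp add: multisets_of_size_def)
        then show "\<gamma> \<in> mono_exps d" using sz[of X] X(2) by (simp add: mono_exps_def)
      qed
      show "mono_exps d \<subseteq> count ` multisets_of_size (UNIV::'n set) d"
      proof
        fix \<alpha> :: "'n \<Rightarrow> nat" assume a: "\<alpha> \<in> mono_exps d"
        have ca: "count (Abs_multiset \<alpha>) = \<alpha>" by (rule count_Abs_multiset) simp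
        then show "\<alpha> \<in> count ` multisets_of_size UNIV d"
          using a by (auto simp: multisets_of_size_def mono_exps_def sz intro!: image_eqI[of _ _ "Abs_multiset \<alpha>"])
      qed
    qed
  qed
  then have "card (mono_exps d :: ('n \<Rightarrow> nat) set) = card (multisets_of_size (UNIV::'n set) d)"
    by (simp add: bij_betw_same_card)
  also have "\<dots> = (CARD('n) + d - 1) choose d"
    by (rule card_multisets_of_size) simp
  finally show ?thesis .
qed


lemma sint_add:
  fixes f g :: "real^'n::finite \<Rightarrow> real"
  assumes "continuous_on UNIV f" "continuous_on UNIV g"
  shows "sint (\<lambda>x. f x + g x) = sint f + sint g"
  unfolding sint_def using integrable_sigma(1)[OF assms(1)] integrable_sigma(1)[OF assms(2)]
  by (simp add: Bochner_Integration.integral_add)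

lemma sint_cmult:
  fixes f :: "real^'n::finite \<Rightarrow> real"
  shows "sint (\<lambda>x. c * f x) = c * sint f"
  unfolding sint_def by simp

lemma sint_sum:
  fixes F :: "'a \<Rightarrow> real^'n::finite \<Rightarrow> real"
  assumes "\<And>a. a \<in> A \<Longrightarrow> continuous_on UNIV (F a)"
  shows "sint (\<lambda>x. \<Sum>a\<in>A. F a x) = (\<Sum>a\<in>A. sint (F a))"
  unfolding sint_def by (rule Bochner_Integration.integral_sum) (use assms integrable_sigma(1) in auto)

lemma sint_const: "sint (\<lambda>x::real^'n::finite. c) = c"
proof -
  have "sint (\<lambda>x::real^'n::finite. c) = (\<integral>x. c \<partial>(UB::(real^'n) measure))"
    by (rule integrable_sigma(2)) simp
  also have "\<dots> = c"
  proof -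
    have "measure (UB::(real^'n) measure) (space UB) = 1" by (rule prob_space.prob_space[OF prob_UB])
    then show ?thesis by simp
  qed
  finally show ?thesis .
qed

lemma forms_mult_cont: "f \<in> forms a \<Longrightarrow> g \<in> forms b \<Longrightarrow> continuous_on UNIV (\<lambda>x. f x * g x)"
  by (intro continuous_intros forms_cont[of f a] forms_cont[of g b]) auto

lemma ip_sym: "ip f g = ip g f"
  by (simp add: ip_def mult.commute)

lemma ip_lincomb_left:
  assumes "finite A" "\<And>a. a \<in> A \<Longrightarrow> f a \<in> forms d" "g \<in> forms d'"
  shows "ip (\<lambda>x. \<Sum>a\<in>A. t a * f a x) g = (\<Sum>a\<in>A. t a * ip (f a) g)"
proof -
  have fc: "\<And>a. a \<in> A \<Longrightarrow> continuous_on UNIV (f a)" using assms(2) forms_cont by blast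
  have gc: "continuous_on UNIV g" using assms(3) forms_cont by blast
  have "ip (\<lambda>x. \<Sum>a\<in>A. t a * f a x) g = sint (\<lambda>x. \<Sum>a\<in>A. t a * (f a x * g x))"
    unfolding ip_def by (simp add: sum_distrib_right mult.assoc)
  also have "\<dots> = (\<Sum>a\<in>A. sint (\<lambda>x. t a * (f a x * g x)))"
    by (rule sint_sum) (use fc gc in \<open>auto intro!: continuous_intros\<close>)
  also have "\<dots> = (\<Sum>a\<in>A. t a * ip (f a) g)"
    by (simp add: sint_cmult ip_def)
  finally show ?thesis .
qed

lemma ip_lincomb_right:
  assumes "finite A" "\<And>a. a \<in> A \<Longrightarrow> f a \<in> forms d" "g \<in> forms d'"
  shows "ip g (\<lambda>x. \<Sum>a\<in>A. t a * f a x) = (\<Sum>a\<in>A. t a * ip g (f a))"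
  using ip_lincomb_left[OF assms] by (simp add: ip_sym)

definition orthonormal :: "nat \<Rightarrow> nat \<Rightarrow> (nat \<Rightarrow> real^'n::finite \<Rightarrow> real) \<Rightarrow> bool" where
  "orthonormal d N e \<longleftrightarrow> (\<forall>i<N. e i \<in> forms d) \<and>
     (\<forall>i<N. \<forall>j<N. ip (e i) (e j) = (if i = j then 1 else 0))"

definition onbP :: "nat \<Rightarrow> nat \<Rightarrow> (nat \<Rightarrow> real^'n::finite \<Rightarrow> real) \<Rightarrow> bool" where
  "onbP d N e \<longleftrightarrow> orthonormal d N e \<and>
     (\<forall>f\<in>forms d. \<exists>t. f = (\<lambda>x. \<Sum>i<N. t i * e i x))"

lemma orthonormal_coeff:
  assumes "orthonormal d N e" "j < N"
  shows "ip (\<lambda>x. \<Sum>i<N. t i * e i x) (e j) = t j"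
proof -
  have "ip (\<lambda>x. \<Sum>i<N. t i * e i x) (e j) = (\<Sum>i<N. t i * ip (e i) (e j))"
    by (rule ip_lincomb_left) (use assms in \<open>auto simp: orthonormal_def\<close>)
  also have "\<dots> = (\<Sum>i<N. if i = j then t i else 0)"
    by (rule sum.cong) (use assms in \<open>auto simp: orthonormal_def\<close>)
  also have "\<dots> = t j" using assms(2) by (simp add: sum.delta)
  finally show ?thesis .
qed

lemma orthonormal_norm:
  assumes "orthonormal d N e"
  shows "ip (\<lambda>x. \<Sum>i<N. t i * e i x) (\<lambda>x. \<Sum>i<N. t i * e i x) = (\<Sum>i<N. (t i)^2)"
proof -
  have mem: "(\<lambda>x. \<Sum>i<N. t i * e i x) \<in> forms d"
    by (rule forms_lincomb) (use assms in \<open>auto simp: orthonormal_def\<close>)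
  have "ip (\<lambda>x. \<Sum>i<N. t i * e i x) (\<lambda>x. \<Sum>i<N. t i * e i x)
      = (\<Sum>j<N. t j * ip (\<lambda>x. \<Sum>i<N. t i * e i x) (e j))"
    by (rule ip_lincomb_right) (use assms mem in \<open>auto simp: orthonormal_def\<close>)
  also have "\<dots> = (\<Sum>j<N. t j * t j)"
    by (rule sum.cong) (use orthonormal_coeff[OF assms] in auto)
  finally show ?thesis by (simp add: power2_eq_square)
qed

definition Ksum :: "nat \<Rightarrow> (nat \<Rightarrow> real^'n::finite \<Rightarrow> real) \<Rightarrow> real^'n \<Rightarrow> real" where
  "Ksum N e x = (\<Sum>i<N. (e i x)^2)"

lemma Ksum_le:
  assumes e: "orthonormal d N e" and e': "onbP d N' e'"
  shows "Ksum N e x \<le> Ksum N' e' x"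
proof -
  define K where "K = (\<lambda>y. \<Sum>i<N. e i x * e i y)"
  have Kf: "K \<in> forms d" unfolding K_def
    by (rule forms_lincomb) (use e in \<open>auto simp: orthonormal_def\<close>)
  have Kx: "K x = Ksum N e x" by (simp add: K_def Ksum_def power2_eq_square)
  have KK: "ip K K = Ksum N e x"
    unfolding K_def using orthonormal_norm[OF e, of "\<lambda>i. e i x"] by (simp add: Ksum_def)
  obtain t where t: "K = (\<lambda>y. \<Sum>i<N'. t i * e' i y)" using e' Kf by (auto simp: onbP_def)
  have e'o: "orthonormal d N' e'" using e' by (simp add: onbP_def)
  have KK2: "ip K K = (\<Sum>i<N'. (t i)^2)" unfolding t by (rule orthonormal_norm[OF e'o])
  have "(\<Sum>i<N'. t i * e' i x)^2 \<le> (\<Sum>i<N'. (t i)^2) * (\<Sum>i<N'. (e' i x)^2)"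
    by (rule Cauchy_Schwarz_ineq_sum)
  then have "(K x)^2 \<le> (\<Sum>i<N'. (t i)^2) * (\<Sum>i<N'. (e' i x)^2)"
    using t by simp
  then have "(Ksum N e x)^2 \<le> Ksum N e x * Ksum N' e' x"
    using Kx KK KK2 by (simp add: Ksum_def)
  moreover have "Ksum N e x \<ge> 0" "Ksum N' e' x \<ge> 0" by (simp_all add: Ksum_def sum_nonneg)
  ultimately show ?thesis
    by (smt (verit, best) mult_le_cancel_left power2_eq_square)
qed

lemma onbP_orth_comp:
  fixes T :: "real^'n::finite \<Rightarrow> real^'n"
  assumes e: "onbP d N e" and T: "orthogonal_transformation T"
  shows "onbP d N (\<lambda>i x. e i (T x))"
proof -
  have lin: "linear T" using T by (rule orthogonal_transformation_linear)
  have ef: "\<And>i. i < N \<Longrightarrow> e i \<in> forms d" using e by (auto simp: onbP_def orthonormal_def)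
  have mem: "\<And>i. i < N \<Longrightarrow> (\<lambda>x. e i (T x)) \<in> forms d"
    using forms_linear_comp[OF lin] ef by blast
  have ipT: "ip (\<lambda>x. e i (T x)) (\<lambda>x. e j (T x)) = ip (e i) (e j)" if "i < N" "j < N" for i j
  proof -
    have c: "continuous_on UNIV (\<lambda>x. e i x * e j x)"
      using forms_mult_cont[OF ef[OF that(1)] ef[OF that(2)]] .
    show ?thesis unfolding ip_def using sint_orth[of T "\<lambda>x. e i x * e j x", OF T c] by simp
  qed
  have "orthonormal d N (\<lambda>i x. e i (T x))"
    using e mem ipT by (auto simp: onbP_def orthonormal_def)
  moreover have "\<exists>t. f = (\<lambda>x. \<Sum>i<N. t i * e i (T x))" if f: "f \<in> forms d" for f
  proof -
    define Ti where "Ti = inv T"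
    have Ti: "orthogonal_transformation Ti" using T by (simp add: Ti_def orthogonal_transformation_inv)
    have TiT: "Ti (T x) = x" for x
      using orthogonal_transformation_inj[OF T] by (simp add: Ti_def)
    have "(\<lambda>x. f (Ti x)) \<in> forms d"
      by (rule forms_linear_comp[OF orthogonal_transformation_linear[OF Ti] f])
    then obtain t where t: "(\<lambda>x. f (Ti x)) = (\<lambda>x. \<Sum>i<N. t i * e i x)"
      using e by (auto simp: onbP_def)
    have "f x = (\<Sum>i<N. t i * e i (T x))" for x
      using fun_cong[OF t, of "T x"] by (simp add: TiT)
    then show ?thesis by auto
  qed
  ultimately show ?thesis by (simp add: onbP_def)
qed

lemma Ksum_orth:
  fixes T :: "real^'n::finite \<Rightarrow> real^'n"
  assumes e: "onbP d N e" and T: "orthogonal_transformation T"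
  shows "Ksum N e (T x) = Ksum N e x"
proof -
  have eT: "onbP d N (\<lambda>i x. e i (T x))" by (rule onbP_orth_comp[OF e T])
  have "Ksum N e (T x) = Ksum N (\<lambda>i x. e i (T x)) x" by (simp add: Ksum_def)
  moreover have "Ksum N (\<lambda>i x. e i (T x)) x \<le> Ksum N e x"
    using Ksum_le[OF _ e] eT by (simp add: onbP_def)
  moreover have "Ksum N e x \<le> Ksum N (\<lambda>i x. e i (T x)) x"
    using Ksum_le[OF _ eT] e by (simp add: onbP_def)
  ultimately show ?thesis by simp
qed

lemma Ksum_sphere_const:
  assumes e: "onbP d N e" and x: "norm x = 1" and y: "norm y = 1"
  shows "Ksum N e x = Ksum N e y"
proof -
  obtain T where T: "orthogonal_transformation T" "T x = y"
    using orthogonal_transformation_exists[of x y] x y by auto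
  show ?thesis using Ksum_orth[OF e T(1), of x] T(2) by simp
qed

lemma Ksum_sphere:
  fixes e :: "nat \<Rightarrow> real^'n::finite \<Rightarrow> real"
  assumes e: "onbP d N e" and x: "norm x = 1"
  shows "Ksum N e x = real N"
proof -
  have ef: "\<And>i. i < N \<Longrightarrow> e i \<in> forms d" using e by (auto simp: onbP_def orthonormal_def)
  have cont: "continuous_on UNIV (Ksum N e)"
    unfolding Ksum_def by (intro continuous_intros) (use ef forms_cont in auto)
  have "sint (Ksum N e) = (\<Sum>i<N. sint (\<lambda>y. (e i y)^2))"
    unfolding Ksum_def by (rule sint_sum) (use ef forms_cont in \<open>auto intro!: continuous_intros\<close>)
  also have "\<dots> = (\<Sum>i<N. ip (e i) (e i))"
    by (simp add: ip_def power2_eq_square)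
  also have "\<dots> = real N"
    using e by (simp add: onbP_def orthonormal_def)
  finally have s1: "sint (Ksum N e) = real N" .
  have "sint (Ksum N e) = sint (\<lambda>y::real^'n. Ksum N e x)"
    by (rule sint_cong_sphere) (use cont Ksum_sphere_const[OF e _ x] in auto)
  also have "\<dots> = Ksum N e x" by (rule sint_const)
  finally show ?thesis using s1 by simp
qed


definition fscale :: "real \<Rightarrow> ('a \<Rightarrow> real) \<Rightarrow> 'a \<Rightarrow> real" where
  "fscale c f = (\<lambda>x. c * f x)"

interpretation fvs: vector_space "fscale :: real \<Rightarrow> ('a \<Rightarrow> real) \<Rightarrow> 'a \<Rightarrow> real"
  by unfold_locales (auto simp: fscale_def fun_eq_iff algebra_simps)

lemma fsum_apply: "(\<Sum>v\<in>A. (g v :: 'a \<Rightarrow> real)) x = (\<Sum>v\<in>A. g v x)"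
proof (cases "finite A")
  case True then show ?thesis by (induction A rule: finite_induct) auto
next
  case False then show ?thesis by simp
qed

lemma lincomb_span:
  assumes "finite A" "\<And>a. a \<in> A \<Longrightarrow> f a \<in> fvs.span S"
  shows "(\<lambda>x. \<Sum>a\<in>A. t a * f a x) \<in> fvs.span S"
proof -
  have "(\<lambda>x. \<Sum>a\<in>A. t a * f a x) = (\<Sum>a\<in>A. fscale (t a) (f a))"
    by (simp add: fun_eq_iff fsum_apply fscale_def)
  also have "\<dots> \<in> fvs.span S"
    by (intro fvs.span_sum fvs.span_scale assms)
  finally show ?thesis .
qed

lemma ip_zero_left: "ip (\<lambda>x. 0) g = 0"
  by (simp add: ip_def sint_def)

lemma onbP_card:
  fixes e :: "nat \<Rightarrow> real^'n::finite \<Rightarrow> real"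
  assumes e: "onbP d N e"
  shows "N = card (mono_exps d :: ('n \<Rightarrow> nat) set)"
proof -
  have eo: "orthonormal d N e" using e by (simp add: onbP_def)
  have ef: "\<And>i. i < N \<Longrightarrow> e i \<in> forms d" using eo by (simp add: orthonormal_def)
  define E where "E = e ` {..<N}"
  define Mo where "Mo = (mon ` mono_exps d :: (real^'n \<Rightarrow> real) set)"
  have injE: "inj_on e {..<N}"
  proof (rule inj_onI)
    fix i j assume ij: "i \<in> {..<N}" "j \<in> {..<N}" "e i = e j"
    show "i = j"
    proof (rule ccontr)
      assume "i \<noteq> j"
      then have "ip (e i) (e j) = 0" using eo ij(1,2) by (simp add: orthonormal_def)
      moreover have "ip (e i) (e i) = 1" using eo ij(1) by (simp add: orthonormal_def)
      ultimately show False using ij(3) by simp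
    qed
  qed
  have injM: "inj_on mon (mono_exps d :: ('n \<Rightarrow> nat) set)"
  proof (rule inj_onI)
    fix \<alpha> \<beta> :: "'n \<Rightarrow> nat" assume ab: "\<alpha> \<in> mono_exps d" "\<beta> \<in> mono_exps d" "mon \<alpha> = mon \<beta>"
    show "\<alpha> = \<beta>"
    proof (rule ccontr)
      assume ne: "\<alpha> \<noteq> \<beta>"
      define c where "c \<gamma> = (if \<gamma> = \<alpha> then 1 else if \<gamma> = \<beta> then -1 else (0::real))" for \<gamma>
      have "(\<Sum>\<gamma>\<in>mono_exps d. c \<gamma> * mon \<gamma> x) = 0" for x :: "real^'n"
      proof -
        have "(\<Sum>\<gamma>\<in>mono_exps d. c \<gamma> * mon \<gamma> x)
            = (\<Sum>\<gamma>\<in>mono_exps d. (if \<gamma> = \<alpha> then mon \<alpha> x else 0) - (if \<gamma> = \<beta> then mon \<beta> x else 0))"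
          by (rule sum.cong) (use ne ab in \<open>auto simp: c_def\<close>)
        also have "\<dots> = mon \<alpha> x - mon \<beta> x"
          using ab by (simp add: sum_subtractf sum.delta[OF finite_mono_exps])
        finally show ?thesis using ab by simp
      qed
      then have "c \<alpha> = 0" using mon_indep ab(1) by blast
      then show False by (simp add: c_def)
    qed
  qed
  have Eind: "fvs.independent E"
  proof (rule fvs.independent_if_scalars_zero)
    show "finite E" by (simp add: E_def)
    fix u v assume z: "(\<Sum>v\<in>E. fscale (u v) v) = 0" and v: "v \<in> E"
    obtain j where j: "j < N" "v = e j" using v by (auto simp: E_def)
    have "(\<Sum>v\<in>E. fscale (u v) v) = (\<Sum>i<N. fscale (u (e i)) (e i))"
      unfolding E_def by (rule sum.reindex[OF injE, unfolded comp_def])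
    then have "(\<lambda>x. \<Sum>i<N. u (e i) * e i x) = (\<lambda>x. 0)"
      using z by (simp add: fun_eq_iff fsum_apply fscale_def)
    then have "ip (\<lambda>x. \<Sum>i<N. u (e i) * e i x) (e j) = 0" by (simp add: ip_zero_left)
    then show "u v = 0" using orthonormal_coeff[OF eo j(1), of "\<lambda>i. u (e i)"] j by simp
  qed
  have Mind: "fvs.independent Mo"
  proof (rule fvs.independent_if_scalars_zero)
    show "finite Mo" by (simp add: Mo_def finite_mono_exps)
    fix u v assume z: "(\<Sum>v\<in>Mo. fscale (u v) v) = 0" and v: "v \<in> Mo"
    obtain \<beta> where b: "\<beta> \<in> mono_exps d" "v = mon \<beta>" using v by (auto simp: Mo_def)
    have "(\<Sum>v\<in>Mo. fscale (u v) v) = (\<Sum>\<alpha>\<in>mono_exps d. fscale (u (mon \<alpha>)) (mon \<alpha>))"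
      unfolding Mo_def by (rule sum.reindex[OF injM, unfolded comp_def])
    then have "\<And>x. (\<Sum>\<alpha>\<in>mono_exps d. u (mon \<alpha>) * mon \<alpha> x) = 0"
      using z by (simp add: fun_eq_iff fsum_apply fscale_def)
    then show "u v = 0" using mon_indep[of "\<lambda>\<alpha>. u (mon \<alpha>)" d \<beta>] b by simp
  qed
  have ES: "E \<subseteq> fvs.span Mo"
  proof
    fix v assume "v \<in> E"
    then obtain i where i: "i < N" "v = e i" by (auto simp: E_def)
    obtain c where c: "e i = (\<lambda>x. \<Sum>\<alpha>\<in>mono_exps d. c \<alpha> * mon \<alpha> x)"
      using ef[OF i(1)] forms_iff by blast
    have "(\<lambda>x. \<Sum>\<alpha>\<in>mono_exps d. c \<alpha> * mon \<alpha> x) \<in> fvs.span Mo"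
      by (rule lincomb_span) (auto simp: finite_mono_exps Mo_def intro: fvs.span_base)
    then show "v \<in> fvs.span Mo" using c i by simp
  qed
  have MS: "Mo \<subseteq> fvs.span E"
  proof
    fix v assume "v \<in> Mo"
    then obtain \<alpha> where a: "\<alpha> \<in> mono_exps d" "v = mon \<alpha>" by (auto simp: Mo_def)
    obtain t where t: "mon \<alpha> = (\<lambda>x. \<Sum>i<N. t i * e i x)"
      using e mon_forms[OF a(1)] by (auto simp: onbP_def)
    have "(\<lambda>x. \<Sum>i<N. t i * e i x) \<in> fvs.span E"
      by (rule lincomb_span) (auto simp: E_def intro: fvs.span_base)
    then show "v \<in> fvs.span E" using t a by simp
  qed
  have "card E \<le> card Mo"
    using fvs.independent_span_bound[OF _ Eind ES] by (simp add: Mo_def finite_mono_exps)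
  moreover have "card Mo \<le> card E"
    using fvs.independent_span_bound[OF _ Mind MS] by (simp add: E_def)
  moreover have "card E = N" using injE by (simp add: E_def card_image)
  moreover have "card Mo = card (mono_exps d :: ('n \<Rightarrow> nat) set)" using injM by (simp add: Mo_def card_image)
  ultimately show ?thesis by simp
qed


lemma sphere_point: "\<exists>y::real^'n::finite. norm y = 1"
  by (rule exI[of _ "axis undefined 1"]) simp

lemma forms_polar:
  assumes "f \<in> forms d" "x \<noteq> 0"
  shows "f x = norm x ^ d * f (nproj x)"
proof -
  have "x = norm x *\<^sub>R nproj x" using assms(2) by (simp add: nproj_def)
  then have "f x = f (norm x *\<^sub>R nproj x)" by simp
  also have "\<dots> = norm x ^ d * f (nproj x)" by (rule forms_homog[OF assms(1)])
  finally show ?thesis .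
qed

lemma forms_at0:
  assumes "f \<in> forms d"
  shows "f 0 = 0 ^ d * f y"
  using forms_homog[OF assms, of 0 y] by simp

lemma forms_zero_sphere:
  fixes f :: "real^'n::finite \<Rightarrow> real"
  assumes f: "f \<in> forms d" and z: "\<And>x. norm x = 1 \<Longrightarrow> f x = 0"
  shows "f = (\<lambda>x. 0)"
proof
  fix x :: "real^'n"
  show "f x = 0"
  proof (cases "x = 0")
    case True
    obtain y :: "real^'n" where "norm y = 1" using sphere_point by blast
    then show ?thesis using forms_at0[OF f, of y] z True by simp
  next
    case False
    have "f (nproj x) = 0" using z norm_nproj[OF False] by blast
    then show ?thesis using forms_polar[OF f False] by simp
  qed
qed

lemma forms_nonneg_sphere:
  fixes f :: "real^'n::finite \<Rightarrow> real"
  assumes f: "f \<in> forms d" and z: "\<And>x. norm x = 1 \<Longrightarrow> f x \<ge> 0"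
  shows "f x \<ge> 0"
proof (cases "x = 0")
  case True
  obtain y :: "real^'n" where "norm y = 1" using sphere_point by blast
  then show ?thesis using forms_at0[OF f, of y] z True by simp
next
  case False
  have "f (nproj x) \<ge> 0" using z norm_nproj[OF False] by blast
  then show ?thesis using forms_polar[OF f False] by simp
qed

lemma forms_eq_sphere:
  fixes f g :: "real^'n::finite \<Rightarrow> real"
  assumes f: "f \<in> forms d" and g: "g \<in> forms d" and z: "\<And>x. norm x = 1 \<Longrightarrow> f x = g x"
  shows "f = g"
proof -
  have "(\<lambda>x. f x + (-1) * g x) \<in> forms d" by (intro forms_add forms_smult f g)
  then have "(\<lambda>x. f x + (-1) * g x) = (\<lambda>x. 0)" by (rule forms_zero_sphere) (simp add: z)
  then show ?thesis by (simp add: fun_eq_iff)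
qed

lemma ip_pos_def:
  fixes f :: "real^'n::finite \<Rightarrow> real"
  assumes f: "f \<in> forms d" and z: "ip f f = 0"
  shows "f = (\<lambda>x. 0)"
proof (rule forms_zero_sphere[OF f])
  fix x :: "real^'n" assume x: "norm x = 1"
  have "(\<lambda>x. f x * f x) x = 0"
    by (rule sint_zero_sphere[OF forms_mult_cont[OF f f] _ _ x]) (use z in \<open>auto simp: ip_def\<close>)
  then show "f x = 0" by simp
qed

lemma ip_nonneg: "f \<in> forms d \<Longrightarrow> ip f f \<ge> 0"
  unfolding ip_def using sint_mono_sphere[of "\<lambda>x. 0" "\<lambda>x. f x * f x"] forms_mult_cont[of f d f d]
  by (simp add: sint_const)

lemma ip_r2k: "continuous_on UNIV f \<Longrightarrow> ip f (r2k k) = sint f"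
  unfolding ip_def
  by (rule sint_cong_sphere) (auto intro!: continuous_intros forms_cont[OF r2k_forms] simp: r2k_sphere)

lemma r2k_unit: "ip (r2k k) (r2k k :: real^'n::finite \<Rightarrow> real) = 1"
proof -
  have "ip (r2k k) (r2k k :: real^'n::finite \<Rightarrow> real) = sint (r2k k :: real^'n::finite \<Rightarrow> real)"
    by (rule ip_r2k[OF forms_cont[OF r2k_forms]])
  also have "\<dots> = sint (\<lambda>x::real^'n. 1)"
    by (rule sint_cong_sphere) (auto intro: forms_cont[OF r2k_forms] simp: r2k_sphere)
  finally show ?thesis by (simp add: sint_const)
qed

lemma ip_diff_left:
  assumes "f \<in> forms d" "h \<in> forms d" "g \<in> forms d'"
  shows "ip (\<lambda>x. f x - h x) g = ip f g - ip h g"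
proof -
  have c1: "continuous_on UNIV (\<lambda>x. f x * g x)" by (rule forms_mult_cont[OF assms(1,3)])
  have c2: "continuous_on UNIV (\<lambda>x. (-1) * (h x * g x))"
    by (intro continuous_intros forms_mult_cont[OF assms(2,3)])
  have "ip (\<lambda>x. f x - h x) g = sint (\<lambda>x. f x * g x + (-1) * (h x * g x))"
    unfolding ip_def by (simp add: algebra_simps)
  also have "\<dots> = sint (\<lambda>x. f x * g x) + sint (\<lambda>x. (-1) * (h x * g x))"
    by (rule sint_add[OF c1 c2])
  also have "\<dots> = ip f g - ip h g"
    unfolding ip_def sint_cmult by simp
  finally show ?thesis .
qed

lemma ip_scale_left: "ip (\<lambda>x. c * f x) g = c * ip f g"
  unfolding ip_def by (simp add: mult.assoc sint_cmult)

lemma span_extend: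
  fixes N N' :: nat and e e' :: "nat \<Rightarrow> 'a \<Rightarrow> real"
  assumes "N \<le> N'" "\<forall>i<N. e' i = e i" "v = (\<lambda>x. \<Sum>i<N. t i * e i x)"
  shows "\<exists>t'. v = (\<lambda>x. \<Sum>i<N'. t' i * e' i x)"
proof (rule exI[of _ "\<lambda>i. if i < N then t i else 0"])
  have "(\<Sum>i<N'. (if i < N then t i else 0) * e' i x) = (\<Sum>i<N. t i * e i x)" for x
  proof -
    have "(\<Sum>i<N'. (if i < N then t i else 0) * e' i x) = (\<Sum>i<N. (if i < N then t i else 0) * e' i x)"
      by (rule sum.mono_neutral_right) (use assms(1) in auto)
    also have "\<dots> = (\<Sum>i<N. t i * e i x)" by (rule sum.cong) (use assms(2) in auto)
    finally show ?thesis .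
  qed
  then show "v = (\<lambda>x. \<Sum>i<N'. (if i < N then t i else 0) * e' i x)" using assms(3) by simp
qed

lemma gs_step:
  assumes e: "orthonormal d N e" and v: "v \<in> forms d"
  shows "\<exists>N' e'. N \<le> N' \<and> (\<forall>i<N. e' i = e i) \<and> orthonormal d N' e' \<and>
           (\<exists>t. v = (\<lambda>x. \<Sum>i<N'. t i * e' i x))"
proof -
  have ef: "\<And>i. i < N \<Longrightarrow> e i \<in> forms d" using e by (simp add: orthonormal_def)
  define s where "s = (\<lambda>x. \<Sum>i<N. ip v (e i) * e i x)"
  have sf: "s \<in> forms d" unfolding s_def by (rule forms_lincomb) (use ef in auto)
  define w where "w = (\<lambda>x. v x - s x)"
  have wf: "w \<in> forms d" unfolding w_def using forms_add[OF v forms_smult[OF sf, of "-1"]] by simp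
  have wo: "ip w (e j) = 0" if j: "j < N" for j
  proof -
    have "ip w (e j) = ip v (e j) - ip s (e j)"
      unfolding w_def by (rule ip_diff_left[OF v sf ef[OF j]])
    also have "ip s (e j) = ip v (e j)" unfolding s_def by (rule orthonormal_coeff[OF e j])
    finally show ?thesis by simp
  qed
  show ?thesis
  proof (cases "ip w w = 0")
    case True
    then have "w = (\<lambda>x. 0)" by (rule ip_pos_def[OF wf])
    then have "v = s" by (simp add: w_def fun_eq_iff)
    then have "N \<le> N \<and> (\<forall>i<N. e i = e i) \<and> orthonormal d N e \<and> (\<exists>t. v = (\<lambda>x. \<Sum>i<N. t i * e i x))"
      using e unfolding s_def by auto
    then show ?thesis by (rule exI[of _ N, OF exI[of _ e]])
  next
    case False
    define nw where "nw = sqrt (ip w w)"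
    have nwp: "nw > 0" using False ip_nonneg[OF wf] by (simp add: nw_def)
    have nw2: "nw * nw = ip w w" using ip_nonneg[OF wf] by (simp add: nw_def)
    define u where "u = (\<lambda>x. (1 / nw) * w x)"
    have uf: "u \<in> forms d" unfolding u_def by (rule forms_smult[OF wf])
    define e' where "e' = e(N := u)"
    have e'f: "\<And>i. i < Suc N \<Longrightarrow> e' i \<in> forms d" using ef uf by (auto simp: e'_def less_Suc_eq)
    have uo: "ip u (e j) = 0" if "j < N" for j
      unfolding u_def ip_scale_left using wo[OF that] by simp
    have uu: "ip u u = 1"
    proof -
      have "ip u u = (1 / nw) * ip w u" unfolding u_def by (rule ip_scale_left)
      also have "ip w u = ip u w" by (rule ip_sym)
      also have "ip u w = (1 / nw) * ip w w" unfolding u_def by (rule ip_scale_left)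
      finally have "ip u u = (1 / nw) * ((1 / nw) * ip w w)" .
      also have "\<dots> = 1" using nwp nw2[symmetric] by (simp add: field_simps)
      finally show ?thesis .
    qed
    have orth: "orthonormal d (Suc N) e'"
      unfolding orthonormal_def
    proof (intro conjI allI impI)
      fix i assume "i < Suc N" then show "e' i \<in> forms d" by (rule e'f)
    next
      fix i j assume i: "i < Suc N" and j: "j < Suc N"
      show "ip (e' i) (e' j) = (if i = j then 1 else 0)"
      proof (cases "i = N"; cases "j = N")
        assume "i = N" "j = N" then show ?thesis using uu by (simp add: e'_def)
      next
        assume "i = N" "j \<noteq> N" then show ?thesis using uo[of j] j by (simp add: e'_def)
      next
        assume "i \<noteq> N" "j = N" then show ?thesis using uo[of i] i by (simp add: e'_def ip_sym)
      next
        assume "i \<noteq> N" "j \<noteq> N" then show ?thesis using e i j by (simp add: e'_def orthonormal_def)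
      qed
    qed
    have vrep: "v = (\<lambda>x. \<Sum>i<Suc N. (if i = N then nw else ip v (e i)) * e' i x)"
    proof
      fix x
      have "(\<Sum>i<Suc N. (if i = N then nw else ip v (e i)) * e' i x)
          = (\<Sum>i<N. (if i = N then nw else ip v (e i)) * e' i x) + nw * e' N x"
        by (simp add: sum.lessThan_Suc)
      also have "(\<Sum>i<N. (if i = N then nw else ip v (e i)) * e' i x) = s x"
        unfolding s_def by (rule sum.cong) (auto simp: e'_def)
      finally have "(\<Sum>i<Suc N. (if i = N then nw else ip v (e i)) * e' i x) = s x + nw * u x"
        by (simp add: e'_def)
      also have "\<dots> = v x" using nwp by (simp add: u_def w_def)
      finally show "v x = (\<Sum>i<Suc N. (if i = N then nw else ip v (e i)) * e' i x)" by simp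
    qed
    have ex: "\<exists>t. v = (\<lambda>x. \<Sum>i<Suc N. t i * e' i x)"
      by (rule exI[of _ "\<lambda>i. if i = N then nw else ip v (e i)"], rule vrep)
    have ee: "\<forall>i<N. e' i = e i" by (simp add: e'_def)
    have "N \<le> Suc N \<and> (\<forall>i<N. e' i = e i) \<and> orthonormal d (Suc N) e' \<and>
           (\<exists>t. v = (\<lambda>x. \<Sum>i<Suc N. t i * e' i x))"
      by (intro conjI le_SucI order_refl ee orth ex)
    then show ?thesis by (rule exI[of _ "Suc N", OF exI[of _ e']])
  qed
qed

lemma gs_list:
  assumes "orthonormal d N e" "set vs \<subseteq> forms d"
  shows "\<exists>N' e'. N \<le> N' \<and> (\<forall>i<N. e' i = e i) \<and> orthonormal d N' e' \<and>
           (\<forall>v\<in>set vs. \<exists>t. v = (\<lambda>x. \<Sum>i<N'. t i * e' i x))"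
  using assms
proof (induction vs arbitrary: N e)
  case Nil
  have "N \<le> N \<and> (\<forall>i<N. e i = e i) \<and> orthonormal d N e \<and>
           (\<forall>v\<in>set []. \<exists>t. v = (\<lambda>x. \<Sum>i<N. t i * e i x))"
    using Nil.prems(1) by simp
  then show ?case by (rule exI[of _ N, OF exI[of _ e]])
next
  case (Cons v vs)
  have vf: "v \<in> forms d" using Cons.prems(2) by simp
  have vsf: "set vs \<subseteq> forms d" using Cons.prems(2) by simp
  obtain N1 e1 where 1: "N \<le> N1 \<and> (\<forall>i<N. e1 i = e i) \<and> orthonormal d N1 e1 \<and>
      (\<exists>t. v = (\<lambda>x. \<Sum>i<N1. t i * e1 i x))"
    using gs_step[OF Cons.prems(1) vf] by (elim exE) (rule that)
  obtain N2 e2 where 2: "N1 \<le> N2 \<and> (\<forall>i<N1. e2 i = e1 i) \<and> orthonormal d N2 e2 \<and>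
      (\<forall>v\<in>set vs. \<exists>t. v = (\<lambda>x. \<Sum>i<N2. t i * e2 i x))"
    using Cons.IH[OF conjunct1[OF conjunct2[OF conjunct2[OF 1]]] vsf] by (elim exE) (rule that)
  obtain t where t: "v = (\<lambda>x. \<Sum>i<N1. t i * e1 i x)" using 1 by (elim conjE exE)
  have "N1 \<le> N2" "\<forall>i<N1. e2 i = e1 i" using 2 by simp_all
  then have v2: "\<exists>t. v = (\<lambda>x. \<Sum>i<N2. t i * e2 i x)"
    by (rule span_extend[OF _ _ t])
  have a: "N \<le> N2" using 1 2 by simp
  have b: "\<forall>i<N. e2 i = e i"
  proof (intro allI impI)
    fix i assume "i < N"
    then have "i < N1" "e1 i = e i" using 1 by simp_all
    then show "e2 i = e i" using 2 by simp
  qed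
  have c: "orthonormal d N2 e2" using 2 by simp
  have dd: "\<forall>w\<in>set (v # vs). \<exists>t. w = (\<lambda>x. \<Sum>i<N2. t i * e2 i x)"
  proof
    fix w assume "w \<in> set (v # vs)"
    then consider "w = v" | "w \<in> set vs" by auto
    then show "\<exists>t. w = (\<lambda>x. \<Sum>i<N2. t i * e2 i x)"
    proof cases
      case 1 then show ?thesis using v2 by simp
    next
      case 2 then show ?thesis using conjunct2[OF conjunct2[OF conjunct2[OF \<open>N1 \<le> N2 \<and> _\<close>]]] by blast
    qed
  qed
  show ?case by (rule exI[of _ N2, OF exI[of _ e2]]) (intro conjI a b c dd)
qed

lemma onb_exists:
  fixes k :: nat
  shows "\<exists>N (e :: nat \<Rightarrow> real^'n::finite \<Rightarrow> real). 1 \<le> N \<and> e 0 = r2k k \<and> onbP (2*k) N e"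
proof -
  have o1: "orthonormal (2*k) 1 (\<lambda>_. r2k k :: real^'n \<Rightarrow> real)"
    by (simp add: orthonormal_def r2k_forms r2k_unit)
  obtain vs where vs: "set vs = (mon ` mono_exps (2*k) :: (real^'n \<Rightarrow> real) set)"
    using finite_list[of "mon ` mono_exps (2*k) :: (real^'n \<Rightarrow> real) set"] finite_mono_exps by auto
  have vsf: "set vs \<subseteq> forms (2*k)" using vs mon_forms by auto
  obtain N e where Ne0: "1 \<le> N \<and> (\<forall>i<1. e i = r2k k) \<and> orthonormal (2*k) N e \<and>
      (\<forall>v\<in>set vs. \<exists>t. v = (\<lambda>x::real^'n. \<Sum>i<N. t i * e i x))"
    using gs_list[OF o1 vsf] by (elim exE) (rule that)
  have Ne: "1 \<le> N" "\<forall>i<1. e i = r2k k" "orthonormal (2*k) N e"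
      "\<forall>v\<in>set vs. \<exists>t. v = (\<lambda>x::real^'n. \<Sum>i<N. t i * e i x)"
    using Ne0 by simp_all
  have "\<forall>\<alpha>\<in>mono_exps (2*k). \<exists>t. mon \<alpha> = (\<lambda>x::real^'n. \<Sum>i<N. t i * e i x)"
  proof
    fix \<alpha> :: "'n \<Rightarrow> nat" assume "\<alpha> \<in> mono_exps (2*k)"
    then have "mon \<alpha> \<in> set vs" using vs by simp
    then show "\<exists>t. mon \<alpha> = (\<lambda>x::real^'n. \<Sum>i<N. t i * e i x)" using Ne(4) by (rule bspec[rotated])
  qed
  then obtain T where T0: "\<forall>\<alpha>\<in>mono_exps (2*k). mon \<alpha> = (\<lambda>x::real^'n. \<Sum>i<N. T \<alpha> i * e i x)"
    by (elim bchoice[THEN exE]) (rule that)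
  have T: "\<And>\<alpha>. \<alpha> \<in> mono_exps (2*k) \<Longrightarrow> mon \<alpha> = (\<lambda>x::real^'n. \<Sum>i<N. T \<alpha> i * e i x)"
    using T0 by (rule bspec)
  have "\<exists>t. f = (\<lambda>x. \<Sum>i<N. t i * e i x)" if f: "f \<in> forms (2*k)" for f :: "real^'n \<Rightarrow> real"
  proof -
    obtain c where c: "f = (\<lambda>x. \<Sum>\<alpha>\<in>mono_exps (2*k). c \<alpha> * mon \<alpha> x)" using f forms_iff by blast
    have "f x = (\<Sum>i<N. (\<Sum>\<alpha>\<in>mono_exps (2*k). c \<alpha> * T \<alpha> i) * e i x)" for x
    proof -
      have "f x = (\<Sum>\<alpha>\<in>mono_exps (2*k). c \<alpha> * mon \<alpha> x)" using c by simp
      also have "\<dots> = (\<Sum>\<alpha>\<in>mono_exps (2*k). c \<alpha> * (\<Sum>i<N. T \<alpha> i * e i x))"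
        by (rule sum.cong[OF refl]) (simp add: T)
      also have "\<dots> = (\<Sum>\<alpha>\<in>mono_exps (2*k). \<Sum>i<N. c \<alpha> * T \<alpha> i * e i x)"
        by (simp add: sum_distrib_left mult.assoc)
      also have "\<dots> = (\<Sum>i<N. \<Sum>\<alpha>\<in>mono_exps (2*k). c \<alpha> * T \<alpha> i * e i x)"
        by (rule sum.swap)
      also have "\<dots> = (\<Sum>i<N. (\<Sum>\<alpha>\<in>mono_exps (2*k). c \<alpha> * T \<alpha> i) * e i x)"
        by (simp add: sum_distrib_right)
      finally show ?thesis .
    qed
    then have "f = (\<lambda>x. \<Sum>i<N. (\<Sum>\<alpha>\<in>mono_exps (2*k). c \<alpha> * T \<alpha> i) * e i x)" by (rule ext)
    then show ?thesis by (rule exI[of _ "\<lambda>i. \<Sum>\<alpha>\<in>mono_exps (2*k). c \<alpha> * T \<alpha> i"])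
  qed
  then have "onbP (2*k) N e" using Ne(3) by (simp add: onbP_def)
  moreover have "e 0 = r2k k" using Ne(2) by simp
  ultimately have "1 \<le> N \<and> e 0 = r2k k \<and> onbP (2*k) N e" using Ne(1) by simp
  then show ?thesis by (rule exI[of _ N, OF exI[of _ e]])
qed


lemma sint_r2k: "sint (r2k k :: real^'n::finite \<Rightarrow> real) = 1"
proof -
  have a: "ip (r2k k) (r2k k :: real^'n \<Rightarrow> real) = sint (r2k k :: real^'n \<Rightarrow> real)"
    by (rule ip_r2k[OF forms_cont[OF r2k_forms]])
  show ?thesis using a r2k_unit[where 'n='n, of k] by simp
qed

lemma r2k_in_M: "r2k k \<in> (Mset k :: (real^'n::finite \<Rightarrow> real) set)"
  by (simp add: Mset_def r2k_forms sint_r2k)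

lemma sint_lincomb:
  assumes "finite A" "\<And>a. a \<in> A \<Longrightarrow> f a \<in> forms d"
  shows "sint (\<lambda>x. \<Sum>a\<in>A. t a * f a x) = (\<Sum>a\<in>A. t a * sint (f a))"
proof -
  have "sint (\<lambda>x. \<Sum>a\<in>A. t a * f a x) = (\<Sum>a\<in>A. sint (\<lambda>x. t a * f a x))"
    by (rule sint_sum) (use assms forms_cont in \<open>auto intro!: continuous_intros\<close>)
  then show ?thesis by (simp add: sint_cmult)
qed

lemma onb_M0_orthonormal: "onb_M0 k m g \<Longrightarrow> orthonormal (2*k) m g"
  by (simp add: onb_M0_def orthonormal_def)

lemma onb_from_M0:
  fixes g :: "nat \<Rightarrow> real^'n::finite \<Rightarrow> real"
  assumes g: "onb_M0 k m g"
  shows "onbP (2*k) (Suc m) (case_nat (r2k k) g)"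
proof -
  let ?e = "case_nat (r2k k) g"
  have gf: "\<And>i. i < m \<Longrightarrow> g i \<in> forms (2*k)" and gs: "\<And>i. i < m \<Longrightarrow> sint (g i) = 0"
    and go: "\<And>i j. i < m \<Longrightarrow> j < m \<Longrightarrow> ip (g i) (g j) = (if i = j then 1 else 0)"
    using g by (auto simp: onb_M0_def)
  have ef: "?e i \<in> forms (2*k)" if "i < Suc m" for i
    using that gf r2k_forms by (cases i) auto
  have r0: "ip (r2k k) (g j) = 0" if "j < m" for j
    using ip_r2k[OF forms_cont[OF gf[OF that]], of k] gs[OF that] by (simp add: ip_sym)
  have orth: "orthonormal (2*k) (Suc m) ?e"
    unfolding orthonormal_def
  proof (intro conjI allI impI)
    fix i assume "i < Suc m" then show "?e i \<in> forms (2*k)" by (rule ef)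
  next
    fix i j assume i: "i < Suc m" and j: "j < Suc m"
    show "ip (?e i) (?e j) = (if i = j then 1 else 0)"
    proof (cases i; cases j)
      assume "i = 0" "j = 0" then show ?thesis by (simp add: r2k_unit)
    next
      fix j' assume "i = 0" "j = Suc j'" then show ?thesis using r0[of j'] j by simp
    next
      fix i' assume "i = Suc i'" "j = 0" then show ?thesis using r0[of i'] i by (simp add: ip_sym)
    next
      fix i' j' assume "i = Suc i'" "j = Suc j'" then show ?thesis using go[of i' j'] i j by simp
    qed
  qed
  have "\<exists>t. f = (\<lambda>x. \<Sum>i<Suc m. t i * ?e i x)" if f: "f \<in> forms (2*k)" for f
  proof -
    define h where "h = (\<lambda>x. f x + (- sint f) * r2k k x)"
    have hf: "h \<in> forms (2*k)" unfolding h_def by (intro forms_add f forms_smult r2k_forms)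
    have c1: "continuous_on UNIV f" by (rule forms_cont[OF f])
    have c2: "continuous_on UNIV (\<lambda>x::real^'n. (- sint f) * r2k k x)"
      by (intro continuous_intros forms_cont[OF r2k_forms])
    have "sint h = sint f + sint (\<lambda>x::real^'n. (- sint f) * r2k k x)"
      unfolding h_def by (rule sint_add[OF c1 c2])
    also have "sint (\<lambda>x::real^'n. (- sint f) * r2k k x) = (- sint f) * sint (r2k k :: real^'n \<Rightarrow> real)"
      by (rule sint_cmult)
    finally have "sint h = sint f + (- sint f) * sint (r2k k :: real^'n \<Rightarrow> real)" .
    then have "sint h = 0" by (simp add: sint_r2k)
    then obtain t where t: "h = (\<lambda>x. \<Sum>i<m. t i * g i x)" using g hf by (auto simp: onb_M0_def)
    have "f x = (\<Sum>i<Suc m. (case_nat (sint f) t i) * ?e i x)" for x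
    proof -
      have "f x = sint f * r2k k x + h x" by (simp add: h_def)
      also have "\<dots> = (\<Sum>i<Suc m. (case_nat (sint f) t i) * ?e i x)"
        unfolding t sum.lessThan_Suc_shift[of "\<lambda>i. (case_nat (sint f) t i) * ?e i x"] by simp
      finally show ?thesis .
    qed
    then show ?thesis by (intro exI[of _ "case_nat (sint f) t"]) (simp add: fun_eq_iff)
  qed
  then show ?thesis using orth by (simp add: onbP_def)
qed

lemma M0_from_onb:
  fixes e :: "nat \<Rightarrow> real^'n::finite \<Rightarrow> real"
  assumes e: "onbP (2*k) N e" and e0: "e 0 = r2k k" and N: "1 \<le> N"
  shows "onb_M0 k (N - 1) (\<lambda>i. e (Suc i))"
proof -
  have eo: "orthonormal (2*k) N e" using e by (simp add: onbP_def)
  have ef: "\<And>i. i < N \<Longrightarrow> e i \<in> forms (2*k)" using eo by (simp add: orthonormal_def)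
  have sg: "sint (e (Suc i)) = 0" if "i < N - 1" for i
  proof -
    have "sint (e (Suc i)) = ip (e (Suc i)) (e 0)"
      using ip_r2k[OF forms_cont[OF ef], of "Suc i" k] that e0 by simp
    also have "\<dots> = 0" using eo that by (simp add: orthonormal_def)
    finally show ?thesis .
  qed
  have sp: "\<exists>t. f = (\<lambda>x. \<Sum>i<N - 1. t i * e (Suc i) x)" if f: "f \<in> forms (2*k)" "sint f = 0" for f
  proof -
    obtain t where t: "f = (\<lambda>x. \<Sum>i<N. t i * e i x)" using e f by (auto simp: onbP_def)
    have "t 0 = ip f (e 0)" unfolding t using orthonormal_coeff[OF eo, of 0] N by simp
    also have "\<dots> = sint f" using ip_r2k[OF forms_cont[OF f(1)], of k] e0 by simp
    finally have t0: "t 0 = 0" using f by simp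
    have NS: "N = Suc (N - 1)" using N by simp
    have "f x = (\<Sum>i<N - 1. t (Suc i) * e (Suc i) x)" for x
    proof -
      have "f x = (\<Sum>i<Suc (N - 1). t i * e i x)" using t NS by simp
      also have "\<dots> = t 0 * e 0 x + (\<Sum>i<N - 1. t (Suc i) * e (Suc i) x)"
        by (rule sum.lessThan_Suc_shift)
      finally show ?thesis using t0 by simp
    qed
    then show ?thesis by (intro exI[of _ "\<lambda>i. t (Suc i)"]) (simp add: fun_eq_iff)
  qed
  show ?thesis
    unfolding onb_M0_def using ef sg sp eo by (auto simp: orthonormal_def)
qed

lemma KG:
  fixes g :: "nat \<Rightarrow> real^'n::finite \<Rightarrow> real"
  assumes g: "onb_M0 k m g"
  shows "Suc m = card (mono_exps (2*k) :: ('n \<Rightarrow> nat) set)"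
    and "\<And>x. norm x = 1 \<Longrightarrow> (\<Sum>i<m. (g i x)^2) = real m"
proof -
  have e: "onbP (2*k) (Suc m) (case_nat (r2k k) g)" by (rule onb_from_M0[OF g])
  show "Suc m = card (mono_exps (2*k) :: ('n \<Rightarrow> nat) set)" by (rule onbP_card[OF e])
  fix x :: "real^'n" assume x: "norm x = 1"
  have "Ksum (Suc m) (case_nat (r2k k) g) x = real (Suc m)" by (rule Ksum_sphere[OF e x])
  moreover have "Ksum (Suc m) (case_nat (r2k k) g) x = (case_nat (r2k k) g 0 x)^2 + (\<Sum>i<m. (case_nat (r2k k) g (Suc i) x)^2)"
    unfolding Ksum_def by (rule sum.lessThan_Suc_shift)
  ultimately show "(\<Sum>i<m. (g i x)^2) = real m"
    by (simp add: r2k_sphere[OF x])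
qed


lemma cs_abs:
  fixes a b :: "'a \<Rightarrow> real"
  shows "\<bar>\<Sum>i\<in>I. a i * b i\<bar> \<le> sqrt (\<Sum>i\<in>I. (a i)^2) * sqrt (\<Sum>i\<in>I. (b i)^2)"
proof -
  have "(\<Sum>i\<in>I. a i * b i)^2 \<le> (\<Sum>i\<in>I. (a i)^2) * (\<Sum>i\<in>I. (b i)^2)"
    by (rule Cauchy_Schwarz_ineq_sum)
  then have "sqrt ((\<Sum>i\<in>I. a i * b i)^2) \<le> sqrt ((\<Sum>i\<in>I. (a i)^2) * (\<Sum>i\<in>I. (b i)^2))"
    by (rule real_sqrt_le_mono)
  then show ?thesis by (simp add: real_sqrt_mult)
qed

lemma amgm:
  fixes b :: "nat \<Rightarrow> real"
  assumes pos: "\<And>i. i < m \<Longrightarrow> b i > 0" and s: "(\<Sum>i<m. b i) \<le> real m"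
  shows "(\<Prod>i<m. b i) \<le> 1" "(\<Prod>i<m. b i) = 1 \<Longrightarrow> (\<forall>i<m. b i = 1)"
proof -
  have pp: "(\<Prod>i<m. b i) > 0" by (rule prod_pos) (use pos in auto)
  have lnp: "ln (\<Prod>i<m. b i) = (\<Sum>i<m. ln (b i))"
    by (rule ln_prod) (use pos in \<open>auto dest: less_imp_neq[symmetric]\<close>)
  have "(\<Sum>i<m. ln (b i)) \<le> (\<Sum>i<m. b i - 1)"
    by (rule sum_mono) (use pos ln_le_minus_one in auto)
  also have "\<dots> = (\<Sum>i<m. b i) - real m" by (simp add: sum_subtractf)
  also have "\<dots> \<le> 0" using s by simp
  finally have lnle: "ln (\<Prod>i<m. b i) \<le> 0" using lnp by simp
  then show "(\<Prod>i<m. b i) \<le> 1" using pp by simp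
  assume eq: "(\<Prod>i<m. b i) = 1"
  then have ls: "(\<Sum>i<m. ln (b i)) = 0" using lnp by simp
  have nn: "\<And>i. i \<in> {..<m} \<Longrightarrow> 0 \<le> b i - 1 - ln (b i)"
    using pos ln_le_minus_one by force
  have "(\<Sum>i<m. b i - 1 - ln (b i)) = (\<Sum>i<m. b i) - real m - (\<Sum>i<m. ln (b i))"
    by (simp add: sum_subtractf)
  also have "\<dots> \<le> 0" using s ls by simp
  finally have le0: "(\<Sum>i<m. b i - 1 - ln (b i)) \<le> 0" .
  have ge0: "(\<Sum>i<m. b i - 1 - ln (b i)) \<ge> 0" by (rule sum_nonneg) (rule nn)
  have "(\<Sum>i<m. b i - 1 - ln (b i)) = 0" using le0 ge0 by linarith
  then have "\<forall>i\<in>{..<m}. b i - 1 - ln (b i) = 0"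
    using sum_nonneg_eq_0_iff[of "{..<m}" "\<lambda>i. b i - 1 - ln (b i)"] nn by simp
  then show "\<forall>i<m. b i = 1"
    using pos ln_eq_minus_one by force
qed

lemma M0_decomp:
  fixes g :: "nat \<Rightarrow> real^'n::finite \<Rightarrow> real"
  assumes g: "onb_M0 k m g" and f: "f \<in> Mset k"
  shows "\<exists>t. (\<lambda>x. f x - r2k k x) = (\<lambda>x. \<Sum>i<m. t i * g i x)"
proof -
  have ff: "f \<in> forms (2*k)" and sf: "sint f = 1" using f by (auto simp: Mset_def)
  have hf: "(\<lambda>x. f x - r2k k x) \<in> forms (2*k)"
    using forms_add[OF ff forms_smult[OF r2k_forms, of "-1"]] by simp
  have c2: "continuous_on UNIV (\<lambda>x::real^'n. (-1) * r2k k x)"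
    by (intro continuous_intros forms_cont[OF r2k_forms])
  have "sint (\<lambda>x. f x + (-1) * r2k k x) = sint f + sint (\<lambda>x::real^'n. (-1) * r2k k x)"
    by (rule sint_add[OF forms_cont[OF ff] c2])
  also have "sint (\<lambda>x::real^'n. (-1) * r2k k x) = (-1) * sint (r2k k :: real^'n \<Rightarrow> real)"
    by (rule sint_cmult)
  finally have "sint (\<lambda>x. f x - r2k k x) = 0" using sf sint_r2k[where 'n='n] by simp
  then show ?thesis using g hf by (auto simp: onb_M0_def)
qed

lemma fnorm_lincomb:
  assumes g: "onb_M0 k m g"
  shows "fnorm (\<lambda>x. \<Sum>i<m. t i * g i x) = sqrt (\<Sum>i<m. (t i)^2)"
  unfolding fnorm_def using orthonormal_norm[OF onb_M0_orthonormal[OF g]] by simp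

lemma lincomb_M:
  fixes g :: "nat \<Rightarrow> real^'n::finite \<Rightarrow> real"
  assumes g: "onb_M0 k m g"
  shows "(\<lambda>x. r2k k x + (\<Sum>i<m. t i * g i x)) \<in> Mset k"
proof -
  have gf: "\<And>i. i < m \<Longrightarrow> g i \<in> forms (2*k)" and gs: "\<And>i. i < m \<Longrightarrow> sint (g i) = 0"
    using g by (auto simp: onb_M0_def)
  have lf: "(\<lambda>x. \<Sum>i<m. t i * g i x) \<in> forms (2*k)" by (rule forms_lincomb) (use gf in auto)
  have "sint (\<lambda>x. r2k k x + (\<Sum>i<m. t i * g i x)) = sint (r2k k :: real^'n \<Rightarrow> real) + sint (\<lambda>x. \<Sum>i<m. t i * g i x)"
    by (rule sint_add[OF forms_cont[OF r2k_forms] forms_cont[OF lf]])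
  also have "sint (\<lambda>x. \<Sum>i<m. t i * g i x) = (\<Sum>i<m. t i * sint (g i))"
    by (rule sint_lincomb) (use gf in auto)
  finally have "sint (\<lambda>x. r2k k x + (\<Sum>i<m. t i * g i x)) = 1" using gs sint_r2k[where 'n='n] by simp
  moreover have "(\<lambda>x. r2k k x + (\<Sum>i<m. t i * g i x)) \<in> forms (2*k)"
    by (rule forms_add[OF r2k_forms lf])
  ultimately show ?thesis by (simp add: Mset_def)
qed

lemma ellipsoid_ball:
  fixes g :: "nat \<Rightarrow> real^'n::finite \<Rightarrow> real"
  assumes g: "onb_M0 k m g" and rho: "\<rho> > 0"
  shows "ellipsoid (r2k k) g (\<lambda>_. \<rho>) m = {f \<in> Mset k. fnorm (\<lambda>x. f x - r2k k x) \<le> \<rho>}"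
proof
  show "ellipsoid (r2k k) g (\<lambda>_. \<rho>) m \<subseteq> {f \<in> Mset k. fnorm (\<lambda>x. f x - r2k k x) \<le> \<rho>}"
  proof
    fix f :: "real^'n \<Rightarrow> real" assume "f \<in> ellipsoid (r2k k) g (\<lambda>_. \<rho>) m"
    then obtain t where t: "f = (\<lambda>x. r2k k x + (\<Sum>i<m. t i * g i x))" "(\<Sum>i<m. (t i / \<rho>)^2) \<le> 1"
      by (auto simp: ellipsoid_def)
    have "(\<Sum>i<m. (t i)^2) = \<rho>^2 * (\<Sum>i<m. (t i / \<rho>)^2)"
      using rho by (simp add: sum_distrib_left power_divide)
    also have "\<dots> \<le> \<rho>^2" using t(2) rho by (simp add: mult_left_le)
    finally have "sqrt (\<Sum>i<m. (t i)^2) \<le> \<rho>"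
      using rho by (intro real_le_lsqrt) auto
    moreover have "(\<lambda>x. f x - r2k k x) = (\<lambda>x. \<Sum>i<m. t i * g i x)" using t(1) by simp
    ultimately show "f \<in> {f \<in> Mset k. fnorm (\<lambda>x. f x - r2k k x) \<le> \<rho>}"
      using lincomb_M[OF g, of t] t(1) fnorm_lincomb[OF g, of t] by simp
  qed
  show "{f \<in> Mset k. fnorm (\<lambda>x. f x - r2k k x) \<le> \<rho>} \<subseteq> ellipsoid (r2k k) g (\<lambda>_. \<rho>) m"
  proof
    fix f :: "real^'n \<Rightarrow> real" assume f: "f \<in> {f \<in> Mset k. fnorm (\<lambda>x. f x - r2k k x) \<le> \<rho>}"
    then obtain t where t: "(\<lambda>x. f x - r2k k x) = (\<lambda>x. \<Sum>i<m. t i * g i x)"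
      using M0_decomp[OF g] by blast
    have "sqrt (\<Sum>i<m. (t i)^2) \<le> \<rho>" using f t fnorm_lincomb[OF g, of t] by simp
    then have "(sqrt (\<Sum>i<m. (t i)^2))^2 \<le> \<rho>^2"
      by (rule power_mono) (simp add: sum_nonneg)
    then have "(\<Sum>i<m. (t i)^2) \<le> \<rho>^2" by (simp add: sum_nonneg)
    then have "\<rho>^2 * (\<Sum>i<m. (t i / \<rho>)^2) \<le> \<rho>^2 * 1"
      using rho by (simp add: sum_distrib_left power_divide)
    then have "(\<Sum>i<m. (t i / \<rho>)^2) \<le> 1" using rho by (simp add: mult_le_cancel_left_pos)
    moreover have "f = (\<lambda>x. r2k k x + (\<Sum>i<m. t i * g i x))"
    proof
      fix x show "f x = r2k k x + (\<Sum>i<m. t i * g i x)" using fun_cong[OF t, of x] by simp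
    qed
    ultimately show "f \<in> ellipsoid (r2k k) g (\<lambda>_. \<rho>) m"
      unfolding ellipsoid_def by blast
  qed
qed


lemma ball_in_C:
  fixes g :: "nat \<Rightarrow> real^'n::finite \<Rightarrow> real"
  assumes g: "onb_M0 k m g" and m: "m > 0" and S: "\<And>x. norm x = 1 \<Longrightarrow> (\<Sum>i<m. (g i x)^2) = real m"
  shows "{f \<in> (Mset k :: (real^'n \<Rightarrow> real) set). fnorm (\<lambda>x. f x - r2k k x) \<le> 1 / sqrt (real m)} \<subseteq> Cbar k"
proof
  fix f :: "real^'n \<Rightarrow> real" assume f: "f \<in> {f \<in> Mset k. fnorm (\<lambda>x. f x - r2k k x) \<le> 1 / sqrt (real m)}"
  then have fM: "f \<in> Mset k" by simp
  then have ff: "f \<in> forms (2*k)" by (simp add: Mset_def)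
  obtain t where t: "(\<lambda>x. f x - r2k k x) = (\<lambda>x. \<Sum>i<m. t i * g i x)"
    using M0_decomp[OF g fM] by blast
  have tn: "sqrt (\<Sum>i<m. (t i)^2) \<le> 1 / sqrt (real m)" using f t fnorm_lincomb[OF g, of t] by simp
  have "f x \<ge> 0" if x: "norm x = 1" for x
  proof -
    have fx: "f x = 1 + (\<Sum>i<m. t i * g i x)" using fun_cong[OF t, of x] r2k_sphere[OF x] by simp
    have "\<bar>\<Sum>i<m. t i * g i x\<bar> \<le> sqrt (\<Sum>i<m. (t i)^2) * sqrt (\<Sum>i<m. (g i x)^2)" by (rule cs_abs)
    also have "\<dots> = sqrt (\<Sum>i<m. (t i)^2) * sqrt (real m)" using S[OF x] by simp
    also have "\<dots> \<le> (1 / sqrt (real m)) * sqrt (real m)"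
      using mult_right_mono[OF tn, of "sqrt (real m)"] by simp
    also have "\<dots> = 1" using m by simp
    finally show ?thesis using fx by linarith
  qed
  then have "\<And>x. f x \<ge> 0" using forms_nonneg_sphere[OF ff] by blast
  then show "f \<in> Cbar k" using fM ff by (simp add: Cbar_def Ccone_def)
qed

lemma john:
  fixes g :: "nat \<Rightarrow> real^'n::finite \<Rightarrow> real" and c :: "real^'n \<Rightarrow> real"
  assumes g: "onb_M0 k m g" and m: "m > 0" and S: "\<And>x. norm x = 1 \<Longrightarrow> (\<Sum>i<m. (g i x)^2) = real m"
    and cM: "c \<in> Mset k" and a: "\<And>i. i < m \<Longrightarrow> a i > 0" and E: "ellipsoid c g a m \<subseteq> Cbar k"
  shows "(\<Prod>i<m. a i) \<le> (1 / sqrt (real m)) ^ m"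
    and "(\<Prod>i<m. a i) = (1 / sqrt (real m)) ^ m \<Longrightarrow> c = r2k k \<and> (\<forall>i<m. a i = 1 / sqrt (real m))"
proof -
  have cf: "c \<in> forms (2*k)" and sc: "sint c = 1" using cM by (auto simp: Mset_def)
  have gf: "\<And>i. i < m \<Longrightarrow> g i \<in> forms (2*k)" using g by (auto simp: onb_M0_def)
  have go: "\<And>i. i < m \<Longrightarrow> ip (g i) (g i) = 1" using g by (auto simp: onb_M0_def)
  have sm: "sqrt (real m) > 0" using m by simp
  have inC: "c x + (\<Sum>i<m. t i * g i x) \<ge> 0" if "(\<Sum>i<m. (t i / a i)^2) \<le> 1" for t x
  proof -
    have "(\<lambda>x. c x + (\<Sum>i<m. t i * g i x)) \<in> ellipsoid c g a m"
      unfolding ellipsoid_def using that by blast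
    then have "(\<lambda>x. c x + (\<Sum>i<m. t i * g i x)) \<in> Ccone k" using E by (auto simp: Cbar_def)
    then show ?thesis by (simp add: Ccone_def)
  qed
  define V where "V x = (\<Sum>i<m. (a i * g i x)^2)" for x
  have V0: "V x \<ge> 0" for x by (simp add: V_def sum_nonneg)
  have step1: "sqrt (V x) \<le> c x" if x: "norm x = 1" for x
  proof (cases "V x = 0")
    case True
    have "c x + (\<Sum>i<m. 0 * g i x) \<ge> 0" by (rule inC) simp
    then show ?thesis using True by simp
  next
    case False
    then have Vp: "V x > 0" using V0[of x] by simp
    define t where "t i = - (a i ^ 2 * g i x) / sqrt (V x)" for i
    have "(\<Sum>i<m. (t i / a i)^2) = (\<Sum>i<m. (a i * g i x)^2 / V x)"
    proof (rule sum.cong[OF refl])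
      fix i assume "i \<in> {..<m}"
      then have "a i > 0" using a by simp
      then show "(t i / a i)^2 = (a i * g i x)^2 / V x"
        using Vp by (simp add: t_def power2_eq_square field_simps)
    qed
    also have "\<dots> = V x / V x" by (simp only: sum_divide_distrib[symmetric] V_def)
    also have "\<dots> = 1" using Vp by simp
    finally have "c x + (\<Sum>i<m. t i * g i x) \<ge> 0" by (intro inC) simp
    moreover have "(\<Sum>i<m. t i * g i x) = - V x / sqrt (V x)"
      by (simp add: t_def V_def sum_divide_distrib power2_eq_square algebra_simps flip: sum_negf)
    moreover have "V x / sqrt (V x) = sqrt (V x)"
      using Vp by (metis real_div_sqrt less_imp_le)
    ultimately show ?thesis by simp
  qed
  have step2: "(\<Sum>i<m. a i * (g i x * g i x)) \<le> sqrt (real m) * c x" if x: "norm x = 1" for x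
  proof -
    have "(\<Sum>i<m. a i * (g i x * g i x)) = (\<Sum>i<m. (a i * g i x) * g i x)" by (simp add: mult.assoc)
    also have "\<dots> \<le> \<bar>\<Sum>i<m. (a i * g i x) * g i x\<bar>" by simp
    also have "\<dots> \<le> sqrt (V x) * sqrt (\<Sum>i<m. (g i x)^2)" unfolding V_def by (rule cs_abs)
    also have "\<dots> = sqrt (V x) * sqrt (real m)" using S[OF x] by simp
    also have "\<dots> \<le> c x * sqrt (real m)" by (rule mult_right_mono[OF step1[OF x]]) simp
    finally show ?thesis by (simp add: mult.commute)
  qed
  have cont1: "continuous_on UNIV (\<lambda>x. \<Sum>i<m. a i * (g i x * g i x))"
    by (intro continuous_intros) (use gf forms_cont in auto)
  have cont2: "continuous_on UNIV (\<lambda>x. sqrt (real m) * c x)"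
    by (intro continuous_intros forms_cont[OF cf])
  have int1: "sint (\<lambda>x. \<Sum>i<m. a i * (g i x * g i x)) = (\<Sum>i<m. a i)"
  proof -
    have "sint (\<lambda>x. \<Sum>i<m. a i * (g i x * g i x)) = (\<Sum>i<m. sint (\<lambda>x. a i * (g i x * g i x)))"
      by (rule sint_sum) (use gf forms_cont in \<open>auto intro!: continuous_intros\<close>)
    also have "\<dots> = (\<Sum>i<m. a i * ip (g i) (g i))" by (simp add: sint_cmult ip_def)
    also have "\<dots> = (\<Sum>i<m. a i)" by (rule sum.cong) (simp_all add: go)
    finally show ?thesis .
  qed
  have int2: "sint (\<lambda>x. sqrt (real m) * c x) = sqrt (real m)" by (simp add: sint_cmult sc)
  have suma: "(\<Sum>i<m. a i) \<le> sqrt (real m)"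
    using sint_mono_sphere[OF cont1 cont2 step2] int1 int2 by simp
  define b where "b i = a i * sqrt (real m)" for i
  have bpos: "\<And>i. i < m \<Longrightarrow> b i > 0" using a sm by (simp add: b_def)
  have sumb: "(\<Sum>i<m. b i) \<le> real m"
  proof -
    have "(\<Sum>i<m. b i) = (\<Sum>i<m. a i) * sqrt (real m)" by (simp add: b_def sum_distrib_right)
    also have "\<dots> \<le> sqrt (real m) * sqrt (real m)" by (rule mult_right_mono[OF suma]) simp
    also have "\<dots> = real m" by simp
    finally show ?thesis .
  qed
  have pa: "(\<Prod>i<m. a i) = (\<Prod>i<m. b i) * (1 / sqrt (real m)) ^ m"
  proof -
    have "(\<Prod>i<m. a i) = (\<Prod>i<m. b i * (1 / sqrt (real m)))"
      by (rule prod.cong) (use sm in \<open>auto simp: b_def\<close>)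
    also have "\<dots> = (\<Prod>i<m. b i) * (1 / sqrt (real m)) ^ m" unfolding prod.distrib by simp
    finally show ?thesis .
  qed
  have rp: "(1 / sqrt (real m)) ^ m > 0" using sm by simp
  show "(\<Prod>i<m. a i) \<le> (1 / sqrt (real m)) ^ m"
    using amgm(1)[OF bpos sumb] pa rp by (simp add: mult_le_cancel_right1)
  assume eq: "(\<Prod>i<m. a i) = (1 / sqrt (real m)) ^ m"
  then have "(\<Prod>i<m. b i) * (1 / sqrt (real m)) ^ m = 1 * (1 / sqrt (real m)) ^ m" using pa by simp
  then have "(\<Prod>i<m. b i) = 1" using rp by (simp only: mult_right_cancel less_irrefl)
  then have b1: "\<forall>i<m. b i = 1" using amgm(2)[of m b] bpos sumb by blast
  have ai: "\<forall>i<m. a i = 1 / sqrt (real m)"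
    using b1 sm by (simp add: b_def field_simps)
  have "(\<Sum>i<m. a i) = real m * (1 / sqrt (real m))" using ai by simp
  also have "\<dots> = sqrt (real m)" using m by (simp add: real_div_sqrt)
  finally have suma2: "(\<Sum>i<m. a i) = sqrt (real m)" .
  define h where "h x = sqrt (real m) * c x + (-1) * (\<Sum>i<m. a i * (g i x * g i x))" for x
  have ch: "continuous_on UNIV h" unfolding h_def by (intro continuous_intros cont1 cont2)
  have "sint h = sqrt (real m) + (-1) * (\<Sum>i<m. a i)"
  proof -
    have "sint h = sint (\<lambda>x. sqrt (real m) * c x) + sint (\<lambda>x. (-1) * (\<Sum>i<m. a i * (g i x * g i x)))"
      unfolding h_def by (rule sint_add) (intro continuous_intros cont1 cont2)+
    then show ?thesis by (simp only: int2 sint_cmult int1)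
  qed
  then have sh: "sint h = 0" using suma2 by simp
  have cx: "c x = r2k k x" if x: "norm x = 1" for x
  proof -
    have "h x = 0"
      by (rule sint_zero_sphere[OF ch _ sh x]) (use step2 in \<open>simp add: h_def\<close>)
    then have "sqrt (real m) * c x = (\<Sum>i<m. a i * (g i x * g i x))" by (simp add: h_def)
    also have "\<dots> = (1 / sqrt (real m)) * (\<Sum>i<m. (g i x)^2)"
      using ai by (simp add: sum_distrib_left power2_eq_square)
    also have "\<dots> = sqrt (real m)" using S[OF x] m by (simp add: real_div_sqrt)
    finally have "c x = 1" using sm by simp
    then show ?thesis using r2k_sphere[OF x] by simp
  qed
  have "c = r2k k" by (rule forms_eq_sphere[OF cf r2k_forms cx])
  then show "c = r2k k \<and> (\<forall>i<m. a i = 1 / sqrt (real m))" using ai by simp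
qed


lemma ellipsoid_cong:
  assumes "\<And>i. i < m \<Longrightarrow> a i = a' i"
  shows "ellipsoid c g a m = ellipsoid c g a' m"
proof -
  have "(\<Sum>i<m. (t i / a i)^2) = (\<Sum>i<m. (t i / a' i)^2)" for t
    by (rule sum.cong) (use assms in auto)
  then show ?thesis by (simp add: ellipsoid_def)
qed

theorem theorem5p3:
  fixes k :: nat
  assumes "CARD('n::finite) \<ge> 2" and "k \<ge> 1"
  defines "B \<equiv> {f \<in> (Mset k :: (real^'n \<Rightarrow> real) set).
                 fnorm (\<lambda>x. f x - r2k k x) \<le> rho CARD('n) k}"
  shows "r2k k \<in> (Mset k :: (real^'n \<Rightarrow> real) set) \<and> B \<subseteq> Cbar k \<and>
    (\<forall>(c :: real^'n \<Rightarrow> real) g a m.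
       c \<in> Mset k \<and> onb_M0 k m g \<and> (\<forall>i<m. a i > 0) \<and> ellipsoid c g a m \<subseteq> Cbar k \<longrightarrow>
         (\<Prod>i<m. a i) \<le> rho CARD('n) k ^ m \<and>
         ((\<Prod>i<m. a i) = rho CARD('n) k ^ m \<longrightarrow> ellipsoid c g a m = B))"
proof -
  define D where "D = (CARD('n) + 2*k - 1) choose (2*k)"
  have Dc: "card (mono_exps (2*k) :: ('n \<Rightarrow> nat) set) = D"
    unfolding D_def by (rule card_mono_exps)
  have D3: "D \<ge> 3"
  proof -
    have "Suc (2*k) choose (2*k) \<le> (CARD('n) + 2*k - 1) choose (2*k)"
      by (rule binomial_right_mono) (use assms(1) in simp)
    then show ?thesis using assms(2) by (simp add: D_def)
  qed
  have gfacts: "m > 0 \<and> rho CARD('n) k = 1 / sqrt (real m) \<and>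
      (\<forall>x. norm x = 1 \<longrightarrow> (\<Sum>i<m. (g i x)^2) = real m)"
    if g: "onb_M0 k m (g :: nat \<Rightarrow> real^'n \<Rightarrow> real)" for m g
  proof -
    have sm: "Suc m = D" using KG(1)[OF g] Dc by simp
    then have "m > 0" using D3 by simp
    moreover have "rho CARD('n) k = 1 / sqrt (real m)"
    proof -
      have "real D - 1 = real m" using sm by (simp flip: sm)
      then show ?thesis unfolding rho_def D_def[symmetric] by simp
    qed
    moreover have "\<forall>x. norm x = 1 \<longrightarrow> (\<Sum>i<m. (g i x)^2) = real m"
      using KG(2)[OF g] by blast
    ultimately show ?thesis by blast
  qed
  have P1: "r2k k \<in> (Mset k :: (real^'n \<Rightarrow> real) set)" by (rule r2k_in_M)
  have P2: "B \<subseteq> Cbar k"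
  proof -
    obtain N and e :: "nat \<Rightarrow> real^'n \<Rightarrow> real" where Ne: "1 \<le> N" "e 0 = r2k k" "onbP (2*k) N e"
      using onb_exists[of k] by blast
    have g: "onb_M0 k (N - 1) (\<lambda>i. e (Suc i))" by (rule M0_from_onb[OF Ne(3) Ne(2) Ne(1)])
    note gf = gfacts[OF g]
    have "{f \<in> (Mset k :: (real^'n \<Rightarrow> real) set). fnorm (\<lambda>x. f x - r2k k x) \<le> 1 / sqrt (real (N - 1))}
        \<subseteq> Cbar k"
      by (rule ball_in_C[OF g]) (use gf in auto)
    then show ?thesis using gf by (simp add: B_def)
  qed
  have P3: "(\<Prod>i<m. a i) \<le> rho CARD('n) k ^ m \<and>
         ((\<Prod>i<m. a i) = rho CARD('n) k ^ m \<longrightarrow> ellipsoid c g a m = B)"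
    if H: "c \<in> Mset k \<and> onb_M0 k m g \<and> (\<forall>i<m. a i > 0) \<and> ellipsoid c g a m \<subseteq> Cbar k"
    for c :: "real^'n \<Rightarrow> real" and g a m
  proof -
    have cM: "c \<in> Mset k" and g: "onb_M0 k m g" and a: "\<And>i. i < m \<Longrightarrow> a i > 0"
      and E: "ellipsoid c g a m \<subseteq> Cbar k" using H by auto
    note gf = gfacts[OF g]
    have m: "m > 0" and rh: "rho CARD('n) k = 1 / sqrt (real m)"
      and S: "\<And>x. norm x = 1 \<Longrightarrow> (\<Sum>i<m. (g i x)^2) = real m" using gf by auto
    note J = john[OF g m S cM a E]
    have "(\<Prod>i<m. a i) \<le> rho CARD('n) k ^ m" using J(1) rh by simp
    moreover have "ellipsoid c g a m = B" if eq: "(\<Prod>i<m. a i) = rho CARD('n) k ^ m"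
    proof -
      have ca: "c = r2k k" "\<forall>i<m. a i = 1 / sqrt (real m)" using J(2) eq rh by auto
      have "ellipsoid c g a m = ellipsoid (r2k k) g (\<lambda>_. 1 / sqrt (real m)) m"
        using ellipsoid_cong[of m a "\<lambda>_. 1 / sqrt (real m)" c g] ca by simp
      also have "\<dots> = {f \<in> Mset k. fnorm (\<lambda>x. f x - r2k k x) \<le> 1 / sqrt (real m)}"
        by (rule ellipsoid_ball[OF g]) (use m in simp)
      also have "\<dots> = B" using rh by (simp add: B_def)
      finally show ?thesis .
    qed
    ultimately show ?thesis by blast
  qed
  show ?thesis using P1 P2 P3 by blast
qed


end
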